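(* The Hilbert series $\sum_{n\ge0}(\dim_k (A_k)_n)t^n$ of $A_k$ equals $(1-7t+7t^2-t^3)^{-1}$.
   Context: Let $k$ be a field. Label the points of the Fano plane by $1,\dots,7$ so that its directed lines are $123,145,167,246,275,374,365$. For $i,j,l\in\{1,\dots,7\}$ put $\varepsilon^{ijl}=1$ if $(i,j,l)$ is a cyclic rotation of one of these directed lines, $\varepsilon^{ijl}=-1$ if $(j,i,l)$ is such a cyclic rotation, and $\varepsilon^{ijl}=0$ otherwise. Let $A_k=k\langle x_1,\dots,x_7\rangle/(r_1,\dots,r_7)$, graded by $\deg x_i=1$, where $r_i=\sum_{m,n=1}^7\varepsilon^{imn}x_mx_n$; explicitly $r_1=[x_2,x_3]+[x_4,x_5]+[x_6,x_7]$, $r_2=[x_3,x_1]+[x_4,x_6]+[x_7,x_5]$, $r_3=[x_1,x_2]+[x_6,x_5]+[x_7,x_4]$, $r_4=[x_5,x_1]+[x_3,x_7]+[x_6,x_2]$, $r_5=[x_1,x_4]+[x_2,x_7]+[x_3,x_6]$, $r_6=[x_7,x_1]+[x_5,x_3]+[x_2,x_4]$, $r_7=[x_1,x_6]+[x_4,x_3]+[x_5,x_2]$. *)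

theory Defs
  imports Main "HOL-Library.Function_Algebras" "HOL-Computational_Algebra.Formal_Power_Series"
begin

text \<open>Elements of the free associative algebra k<x_1,...,x_7> are represented as
  coefficient functions on words (lists of letters); a word [i1,...,in] stands for the
  monomial x_i1 ... x_in.\<close>

type_synonym 'k ncpoly = "nat list \<Rightarrow> 'k"

definition letters :: "nat set" where "letters = {1..7}"

definition free_alg :: "'k::field ncpoly set" where
  "free_alg = {f. finite {w. f w \<noteq> 0} \<and> (\<forall>w. f w \<noteq> 0 \<longrightarrow> set w \<subseteq> letters)}"

definition nc_scale :: "'k::field \<Rightarrow> 'k ncpoly \<Rightarrow> 'k ncpoly" where
  "nc_scale c f = (\<lambda>w. c * f w)"

definition nc_add :: "'k::field ncpoly \<Rightarrow> 'k ncpoly \<Rightarrow> 'k ncpoly" where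
  "nc_add f g = (\<lambda>w. f w + g w)"

definition nc_mult :: "'k::field ncpoly \<Rightarrow> 'k ncpoly \<Rightarrow> 'k ncpoly" where
  "nc_mult f g = (\<lambda>w. \<Sum>i\<le>length w. f (take i w) * g (drop i w))"

definition gen :: "nat \<Rightarrow> 'k::field ncpoly" where
  "gen i = (\<lambda>w. if w = [i] then 1 else 0)"

definition fano_lines :: "(nat \<times> nat \<times> nat) list" where
  "fano_lines = [(1,2,3),(1,4,5),(1,6,7),(2,4,6),(2,7,5),(3,7,4),(3,6,5)]"

definition cyc_line :: "nat \<Rightarrow> nat \<Rightarrow> nat \<Rightarrow> bool" where
  "cyc_line i j l = (\<exists>(a,b,c)\<in>set fano_lines.
      (i,j,l) = (a,b,c) \<or> (i,j,l) = (b,c,a) \<or> (i,j,l) = (c,a,b))"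

definition eps :: "nat \<Rightarrow> nat \<Rightarrow> nat \<Rightarrow> int" where
  "eps i j l = (if cyc_line i j l then 1 else if cyc_line j i l then -1 else 0)"

definition rel :: "nat \<Rightarrow> 'k::field ncpoly" where
  "rel i = (\<lambda>w. \<Sum>m\<in>letters. \<Sum>n\<in>letters.
      of_int (eps i m n) * nc_mult (gen m) (gen n) w)"

definition rel_ideal :: "'k::field ncpoly set" where
  "rel_ideal = \<Inter>{J. J \<subseteq> free_alg \<and> (\<lambda>_. 0) \<in> J \<and> (\<forall>i\<in>letters. rel i \<in> J) \<and>
       (\<forall>f\<in>J. \<forall>g\<in>J. nc_add f g \<in> J) \<and>
       (\<forall>a\<in>free_alg. \<forall>f\<in>J. nc_mult a f \<in> J \<and> nc_mult f a \<in> J)}"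

definition hom_part :: "nat \<Rightarrow> 'k::field ncpoly set" where
  "hom_part n = {f \<in> free_alg. \<forall>w. f w \<noteq> 0 \<longrightarrow> length w = n}"

text \<open>dim_k (A_k)_n, where (A_k)_n is the image of the degree-n part of the free algebra
  in the quotient, i.e. hom_part n / (rel_ideal \<inter> hom_part n).\<close>
definition hilb_dim :: "'k::field itself \<Rightarrow> nat \<Rightarrow> nat" where
  "hilb_dim _ n = vector_space.dim (nc_scale :: 'k \<Rightarrow> 'k ncpoly \<Rightarrow> 'k ncpoly) (hom_part n)
     - vector_space.dim (nc_scale :: 'k \<Rightarrow> 'k ncpoly \<Rightarrow> 'k ncpoly) (rel_ideal \<inter> hom_part n)"

definition hilbert_series :: "'k::field itself \<Rightarrow> rat fps" where
  "hilbert_series K = Abs_fps (\<lambda>n. of_nat (hilb_dim K n))"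

end

theory Submission
  imports Defs
begin

lemma sum_fun_apply: "(\<Sum>i\<in>S. f i) x = (\<Sum>i\<in>S. f i x)"
  by (induct S rule: infinite_finite_induct) auto

abbreviation lw :: "nat list \<Rightarrow> bool" where "lw v \<equiv> set v \<subseteq> letters"

definition Wd :: "nat \<Rightarrow> nat list set" where
  "Wd m = {v. set v \<subseteq> letters \<and> length v \<le> m}"

definition W :: "nat \<Rightarrow> nat list set" where
  "W m = {v. set v \<subseteq> letters \<and> length v = m}"

lemma finite_letters[simp]: "finite letters" by (simp add: letters_def)
lemma finite_Wd[simp]: "finite (Wd m)"
  unfolding Wd_def by (rule finite_lists_length_le) simp
lemma finite_W[simp]: "finite (W m)"
  unfolding W_def by (rule finite_lists_length_eq) simp
lemma card_W: "card (W m) = 7 ^ m"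
  unfolding W_def by (subst card_lists_length_eq) (auto simp: letters_def)

definition ext :: "(nat list \<Rightarrow> 'k::field ncpoly) \<Rightarrow> 'k ncpoly \<Rightarrow> 'k ncpoly" where
  "ext F z = (\<lambda>w. \<Sum>v\<in>Wd (length w). z v * F v w)"

definition single :: "nat list \<Rightarrow> 'k::field ncpoly" where
  "single u = (\<lambda>w. if w = u then 1 else 0)"

definition pre :: "nat \<Rightarrow> 'k::field ncpoly \<Rightarrow> 'k ncpoly" where
  "pre a z = (\<lambda>w. case w of [] \<Rightarrow> 0 | b # w' \<Rightarrow> if b = a then z w' else 0)"

definition ls :: "'k::field ncpoly \<Rightarrow> bool" where
  "ls z \<longleftrightarrow> (\<forall>w. z w \<noteq> 0 \<longrightarrow> lw w)"

definition dge :: "nat \<Rightarrow> 'k::field ncpoly \<Rightarrow> bool" where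
  "dge n z \<longleftrightarrow> (\<forall>w. z w \<noteq> 0 \<longrightarrow> n \<le> length w)"

definition good :: "(nat list \<Rightarrow> 'k::field ncpoly) \<Rightarrow> bool" where
  "good F \<longleftrightarrow> (\<forall>v. lw v \<longrightarrow> ls (F v) \<and> dge (length v) (F v))"

definition lin :: "('k::field ncpoly \<Rightarrow> 'k ncpoly) \<Rightarrow> bool" where
  "lin T \<longleftrightarrow> (\<forall>f g. T (f + g) = T f + T g) \<and> (\<forall>c f. T (nc_scale c f) = nc_scale c (T f))
     \<and> (\<forall>z. ls z \<longrightarrow> ls (T z)) \<and> (\<forall>n z. dge n z \<longrightarrow> dge n (T z))
     \<and> (\<forall>G z. good G \<longrightarrow> T (ext G z) = ext (\<lambda>v. T (G v)) z)"

definition rs :: "('k::field ncpoly \<Rightarrow> 'k ncpoly) \<Rightarrow> bool" where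
  "rs T \<longleftrightarrow> (\<forall>n z. dge n z \<longrightarrow> dge (Suc n) (T z))"

lemma ext_add: "ext F (f + g) = ext F f + ext F g"
  by (auto simp: ext_def algebra_simps sum.distrib)
lemma ext_scale: "ext F (nc_scale c f) = nc_scale c (ext F f)"
  by (auto simp: ext_def nc_scale_def sum_distrib_left mult.assoc)
lemma ext_addF: "ext (\<lambda>v. F v + G v) z = ext F z + ext G z"
  by (auto simp: ext_def algebra_simps sum.distrib)
lemma ext_scaleF: "ext (\<lambda>v. nc_scale c (F v)) z = nc_scale c (ext F z)"
  by (auto simp: ext_def nc_scale_def sum_distrib_left mult.assoc mult.left_commute)

lemma ext_nz:
  assumes "ext F z w \<noteq> 0"
  obtains v where "lw v" "length v \<le> length w" "z v \<noteq> 0" "F v w \<noteq> 0"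
proof -
  from assms have "(\<Sum>v\<in>Wd (length w). z v * F v w) \<noteq> 0" by (simp add: ext_def)
  then obtain v where "v \<in> Wd (length w)" "z v * F v w \<noteq> 0"
    using sum.not_neutral_contains_not_neutral by blast
  then show ?thesis using that by (auto simp: Wd_def)
qed

lemma ls_ext: "good F \<Longrightarrow> ls (ext F z)"
  unfolding ls_def
proof (intro allI impI)
  fix w assume g: "good F" and nz: "ext F z w \<noteq> 0"
  obtain v where "lw v" "F v w \<noteq> 0" using nz by (rule ext_nz)
  then show "lw w" using g unfolding good_def ls_def by blast
qed

lemma dge_ext: "good F \<Longrightarrow> dge n z \<Longrightarrow> dge n (ext F z)"
  unfolding dge_def
proof (intro allI impI)
  fix w assume g: "good F" and d: "\<forall>w. z w \<noteq> 0 \<longrightarrow> n \<le> length w" and nz: "ext F z w \<noteq> 0"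
  obtain v where "lw v" "z v \<noteq> 0" "F v w \<noteq> 0" using nz by (rule ext_nz)
  then show "n \<le> length w" using g d unfolding good_def dge_def by (meson le_trans)
qed

lemma ext_comp:
  assumes G: "good G"
  shows "ext F (ext G z) = ext (\<lambda>v. ext F (G v)) z"
proof
  fix w
  have "ext F (ext G z) w = (\<Sum>u\<in>Wd (length w). \<Sum>v\<in>Wd (length u). z v * G v u * F u w)"
    by (simp add: ext_def sum_distrib_right)
  also have "\<dots> = (\<Sum>u\<in>Wd (length w). \<Sum>v\<in>Wd (length w). z v * G v u * F u w)"
  proof (rule sum.cong[OF refl])
    fix u assume u: "u \<in> Wd (length w)"
    show "(\<Sum>v\<in>Wd (length u). z v * G v u * F u w) = (\<Sum>v\<in>Wd (length w). z v * G v u * F u w)"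
    proof (rule sum.mono_neutral_left)
      show "Wd (length u) \<subseteq> Wd (length w)" using u by (auto simp: Wd_def)
      show "\<forall>v\<in>Wd (length w) - Wd (length u). z v * G v u * F u w = 0"
      proof
        fix v assume v: "v \<in> Wd (length w) - Wd (length u)"
        then have "lw v" "length u < length v" by (auto simp: Wd_def)
        then have "G v u = 0" using G unfolding good_def dge_def by (meson not_le)
        then show "z v * G v u * F u w = 0" by simp
      qed
    qed simp
  qed
  also have "\<dots> = (\<Sum>v\<in>Wd (length w). \<Sum>u\<in>Wd (length w). z v * G v u * F u w)"
    by (rule sum.swap)
  also have "\<dots> = ext (\<lambda>v. ext F (G v)) z w"
    by (simp add: ext_def sum_distrib_left mult.assoc)
  finally show "ext F (ext G z) w = ext (\<lambda>v. ext F (G v)) z w" .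
qed

lemma pre_ext:
  assumes G: "good G"
  shows "pre a (ext G z) = ext (\<lambda>v. pre a (G v)) z"
proof
  fix w
  show "pre a (ext G z) w = ext (\<lambda>v. pre a (G v)) z w"
  proof (cases w)
    case Nil then show ?thesis by (simp add: pre_def ext_def)
  next
    case (Cons b w')
    show ?thesis
    proof (cases "b = a")
      case False then show ?thesis using Cons by (simp add: pre_def ext_def)
    next
      case True
      have "pre a (ext G z) w = (\<Sum>v\<in>Wd (length w'). z v * G v w')"
        using Cons True by (simp add: pre_def ext_def)
      also have "\<dots> = (\<Sum>v\<in>Wd (Suc (length w')). z v * G v w')"
      proof (rule sum.mono_neutral_left)
        show "Wd (length w') \<subseteq> Wd (Suc (length w'))" by (auto simp: Wd_def)
        show "\<forall>v\<in>Wd (Suc (length w')) - Wd (length w'). z v * G v w' = 0"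
        proof
          fix v assume v: "v \<in> Wd (Suc (length w')) - Wd (length w')"
          then have "lw v" "length w' < length v" by (auto simp: Wd_def)
          then have "G v w' = 0" using G unfolding good_def dge_def by (meson not_le)
          then show "z v * G v w' = 0" by simp
        qed
      qed simp
      also have "\<dots> = ext (\<lambda>v. pre a (G v)) z w"
        using Cons True by (simp add: pre_def ext_def)
      finally show ?thesis .
    qed
  qed
qed

lemma lin_ext: "good F \<Longrightarrow> lin (ext F)"
  unfolding lin_def
  by (auto simp: ext_add ext_scale ls_ext dge_ext ext_comp)

lemma pre_add: "pre a (f + g) = pre a f + pre a g"
  by (auto simp: pre_def split: list.split)
lemma pre_scale: "pre a (nc_scale c f) = nc_scale c (pre a f)"
  by (auto simp: pre_def nc_scale_def split: list.split)

lemma lin_pre: 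
  assumes a: "a \<in> letters" shows "lin (pre a :: 'k::field ncpoly \<Rightarrow> 'k ncpoly)"
proof -
  have "ls (pre a z)" if "ls z" for z :: "'k ncpoly"
    using that a by (auto simp: ls_def pre_def split: list.split)
  moreover have "dge n (pre a z)" if "dge n z" for n and z :: "'k ncpoly"
    using that by (fastforce simp: dge_def pre_def split: list.split if_splits)
  ultimately show ?thesis unfolding lin_def by (auto simp: pre_add pre_scale pre_ext)
qed

lemma lin_comp: "lin S \<Longrightarrow> lin T \<Longrightarrow> lin (\<lambda>z. S (T z))"
proof -
  assume S: "lin S" and T: "lin T"
  have gT: "good G \<Longrightarrow> good (\<lambda>v. T (G v))" for G
    using T unfolding lin_def good_def by blast
  show ?thesis using S T gT unfolding lin_def by simp
qed

lemma lin_id: "lin (\<lambda>z. z)"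
  unfolding lin_def by simp

lemma ext_diffF: "ext (\<lambda>v. F v - G v) z = ext F z - ext G z"
  by (auto simp: ext_def algebra_simps sum_subtractf)

lemma ext_negF: "ext (\<lambda>v. - F v) z = - ext F z"
  by (auto simp: ext_def algebra_simps sum_negf)

lemma nc_scale_add: "nc_scale c (f + g) = nc_scale c f + nc_scale c g"
  by (simp add: nc_scale_def fun_eq_iff algebra_simps)
lemma nc_scale_diff: "nc_scale c (f - g) = nc_scale c f - nc_scale c g"
  by (simp add: nc_scale_def fun_eq_iff algebra_simps)
lemma nc_scale_neg: "nc_scale c (- f) = - nc_scale c f"
  by (simp add: nc_scale_def fun_eq_iff algebra_simps)
lemma nc_scale_scale: "nc_scale c (nc_scale d f) = nc_scale d (nc_scale c f)"
  by (simp add: nc_scale_def fun_eq_iff algebra_simps)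

lemma ls_add: "ls f \<Longrightarrow> ls g \<Longrightarrow> ls (f + g)"
  unfolding ls_def by (metis add.right_neutral plus_fun_apply)
lemma ls_diff: "ls f \<Longrightarrow> ls g \<Longrightarrow> ls (f - g)"
  unfolding ls_def by (metis diff_zero minus_apply)
lemma ls_neg: "ls f \<Longrightarrow> ls (- f)"
  unfolding ls_def by simp
lemma ls_scale: "ls f \<Longrightarrow> ls (nc_scale c f)"
  unfolding ls_def nc_scale_def by simp
lemma dge_add: "dge n f \<Longrightarrow> dge n g \<Longrightarrow> dge n (f + g)"
  unfolding dge_def by (metis add.right_neutral plus_fun_apply)
lemma dge_diff: "dge n f \<Longrightarrow> dge n g \<Longrightarrow> dge n (f - g)"
  unfolding dge_def by (metis diff_zero minus_apply)
lemma dge_neg: "dge n f \<Longrightarrow> dge n (- f)"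
  unfolding dge_def by simp
lemma dge_scale: "dge n f \<Longrightarrow> dge n (nc_scale c f)"
  unfolding dge_def nc_scale_def by simp

lemma linI:
  assumes "\<And>f g. T (f + g) = T f + T g" "\<And>c f. T (nc_scale c f) = nc_scale c (T f)"
    "\<And>z. ls z \<Longrightarrow> ls (T z)" "\<And>n z. dge n z \<Longrightarrow> dge n (T z)"
    "\<And>G z. good G \<Longrightarrow> T (ext G z) = ext (\<lambda>v. T (G v)) z"
  shows "lin T"
  using assms unfolding lin_def by blast

lemma lin_addD: "lin T \<Longrightarrow> T (f + g) = T f + T g"
  unfolding lin_def by blast
lemma lin_scaleD: "lin T \<Longrightarrow> T (nc_scale c f) = nc_scale c (T f)"
  unfolding lin_def by blast
lemma lin_lsD: "lin T \<Longrightarrow> ls z \<Longrightarrow> ls (T z)"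
  unfolding lin_def by blast
lemma lin_dgeD: "lin T \<Longrightarrow> dge n z \<Longrightarrow> dge n (T z)"
  unfolding lin_def by blast
lemma lin_extD: "lin T \<Longrightarrow> good G \<Longrightarrow> T (ext G z) = ext (\<lambda>v. T (G v)) z"
  unfolding lin_def by blast

lemma lin_add: assumes S: "lin S" and T: "lin T" shows "lin (\<lambda>z. S z + T z)"
proof (rule linI)
  show "S (f + g) + T (f + g) = S f + T f + (S g + T g)" for f g
    by (simp only: lin_addD[OF S] lin_addD[OF T] add_ac)
  show "S (nc_scale c f) + T (nc_scale c f) = nc_scale c (S f + T f)" for c f
    by (simp only: lin_scaleD[OF S] lin_scaleD[OF T] nc_scale_add)
qed (simp_all add: lin_lsD[OF S] lin_lsD[OF T] lin_dgeD[OF S] lin_dgeD[OF T] lin_extD[OF S]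
      lin_extD[OF T] ls_add dge_add ext_addF)

lemma lin_diff: assumes S: "lin S" and T: "lin T" shows "lin (\<lambda>z. S z - T z)"
proof (rule linI)
  show "S (f + g) - T (f + g) = S f - T f + (S g - T g)" for f g
    by (simp only: lin_addD[OF S] lin_addD[OF T]) (simp add: algebra_simps)
  show "S (nc_scale c f) - T (nc_scale c f) = nc_scale c (S f - T f)" for c f
    by (simp only: lin_scaleD[OF S] lin_scaleD[OF T] nc_scale_diff)
qed (simp_all add: lin_lsD[OF S] lin_lsD[OF T] lin_dgeD[OF S] lin_dgeD[OF T] lin_extD[OF S]
      lin_extD[OF T] ls_diff dge_diff ext_diffF)

lemma lin_neg: assumes S: "lin S" shows "lin (\<lambda>z. - S z)"
proof (rule linI)
  show "- S (f + g) = - S f + - S g" for f g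
    by (simp only: lin_addD[OF S]) (simp add: algebra_simps)
  show "- S (nc_scale c f) = nc_scale c (- S f)" for c f
    by (simp only: lin_scaleD[OF S] nc_scale_neg)
qed (simp_all add: lin_lsD[OF S] lin_dgeD[OF S] lin_extD[OF S] ls_neg dge_neg ext_negF)

lemma lin_scal: assumes S: "lin S" shows "lin (\<lambda>z. nc_scale c (S z))"
proof (rule linI)
  show "nc_scale c (S (f + g)) = nc_scale c (S f) + nc_scale c (S g)" for f g
    by (simp only: lin_addD[OF S] nc_scale_add)
  show "nc_scale c (S (nc_scale d f)) = nc_scale d (nc_scale c (S f))" for d f
    by (simp only: lin_scaleD[OF S] nc_scale_scale)
qed (simp_all add: lin_lsD[OF S] lin_dgeD[OF S] lin_extD[OF S] ls_scale dge_scale ext_scaleF)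

lemma sum_single_delta: "finite A \<Longrightarrow> (\<Sum>v\<in>A. (z::nat list \<Rightarrow> 'k::field) v * (if w = v then 1 else 0)) = (if w \<in> A then z w else 0)"
proof -
  assume "finite A"
  have e: "(\<lambda>v. z v * (if w = v then 1 else 0)) = (\<lambda>v. if w = v then z v else 0)" by auto
  have "(\<Sum>v\<in>A. z v * (if w = v then 1 else 0)) = (\<Sum>v\<in>A. if w = v then z v else 0)"
    by (subst e) (rule refl)
  also have "\<dots> = (if w \<in> A then z w else 0)" using \<open>finite A\<close> by (rule sum.delta')
  finally show ?thesis .
qed

lemma lin_zero: "lin T \<Longrightarrow> T 0 = 0"
proof -
  assume "lin T"
  then have "T (nc_scale 0 0) = nc_scale 0 (T 0)" by (rule lin_scaleD)
  then show ?thesis by (simp add: nc_scale_def zero_fun_def)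
qed

lemma lin_diffD: "lin T \<Longrightarrow> T (f - g) = T f - T g"
proof -
  assume T: "lin T"
  have "T (f - g) + T g = T f" using lin_addD[OF T, of "f - g" g] by simp
  then show ?thesis by (simp add: algebra_simps)
qed

lemma lin_negD: "lin T \<Longrightarrow> T (- f) = - T f"
  using lin_diffD[of T 0 f] lin_zero[of T] by simp

lemma good_comp: "lin T \<Longrightarrow> good G \<Longrightarrow> good (\<lambda>v. T (G v))"
  unfolding good_def by (auto intro: lin_lsD lin_dgeD)

lemma single_apply: "single u w = (if w = u then 1 else 0)"
  by (simp add: single_def)

lemma ls_single[simp]: "lw u \<Longrightarrow> ls (single u)"
  by (auto simp: ls_def single_def)

lemma good_single: "good single"
  by (auto simp: good_def ls_def dge_def single_def)

lemma ext_single_F: "good F \<Longrightarrow> lw u \<Longrightarrow> ext F (single u) = F u"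
proof
  fix w assume g: "good F" and u: "lw u"
  show "ext F (single u) w = F u w"
  proof (cases "length u \<le> length w")
    case True
    then have "u \<in> Wd (length w)" using u by (simp add: Wd_def)
    then show ?thesis
      by (simp add: ext_def single_def if_distrib[of "\<lambda>x. x * _"] sum.delta cong: if_cong)
  next
    case False
    then have "F u w = 0" using g u unfolding good_def dge_def by (meson not_le)
    moreover have "u \<notin> Wd (length w)" using False by (simp add: Wd_def)
    ultimately show ?thesis
      by (simp add: ext_def single_def if_distrib[of "\<lambda>x. x * _"] sum.delta cong: if_cong)
  qed
qed

lemma ext_single_z: "ls z \<Longrightarrow> ext single z = z"
proof
  fix w assume z: "ls z"
  show "ext single z w = z w"
  proof (cases "lw w")
    case True
    then have "w \<in> Wd (length w)" by (simp add: Wd_def)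
    then show ?thesis by (simp add: ext_def single_def sum_single_delta)
  next
    case False
    then have "z w = 0" using z by (auto simp: ls_def)
    moreover have "w \<notin> Wd (length w)" using False by (simp add: Wd_def)
    ultimately show ?thesis by (simp add: ext_def single_def sum_single_delta)
  qed
qed

lemma lin_basis: "lin T \<Longrightarrow> ls z \<Longrightarrow> T z = ext (\<lambda>v. T (single v)) z"
  by (metis ext_single_z good_single lin_extD)

lemma ext_cong_basis: "(\<And>v. lw v \<Longrightarrow> F v = G v) \<Longrightarrow> ext F z = ext G z"
  unfolding ext_def Wd_def by (auto intro!: sum.cong)

lemma pre_single: "pre a (single v) = single (a # v)"
  by (auto simp: pre_def single_def split: list.split)

definition hom :: "nat \<Rightarrow> 'k::field ncpoly \<Rightarrow> bool" where
  "hom n z \<longleftrightarrow> (\<forall>w. z w \<noteq> 0 \<longrightarrow> lw w \<and> length w = n)"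

definition homg :: "(nat list \<Rightarrow> 'k::field ncpoly) \<Rightarrow> bool" where
  "homg F \<longleftrightarrow> (\<forall>v. lw v \<longrightarrow> hom (Suc (length v)) (F v))"

lemma homg_good: "homg F \<Longrightarrow> good F"
  unfolding homg_def good_def hom_def ls_def dge_def by fastforce

lemma hom_ls: "hom n z \<Longrightarrow> ls z"
  unfolding hom_def ls_def by blast
lemma hom_dge: "hom n z \<Longrightarrow> dge n z"
  unfolding hom_def dge_def by fastforce

lemma hom_add: "hom n f \<Longrightarrow> hom n g \<Longrightarrow> hom n (f + g)"
  unfolding hom_def by (metis add.right_neutral plus_fun_apply)
lemma hom_diff: "hom n f \<Longrightarrow> hom n g \<Longrightarrow> hom n (f - g)"
  unfolding hom_def by (metis diff_zero minus_apply)
lemma hom_neg: "hom n f \<Longrightarrow> hom n (- f)"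
  unfolding hom_def by auto
lemma hom_scale: "hom n f \<Longrightarrow> hom n (nc_scale c f)"
  unfolding hom_def nc_scale_def by auto
lemma hom_zero: "hom n 0"
  unfolding hom_def by auto
lemma hom_single: "lw v \<Longrightarrow> hom (length v) (single v)"
  unfolding hom_def single_def by auto
lemma hom_pre: "a \<in> letters \<Longrightarrow> hom n z \<Longrightarrow> hom (Suc n) (pre a z)"
  unfolding hom_def pre_def by (auto split: list.split if_splits)
lemma hom_ext: "homg F \<Longrightarrow> hom n z \<Longrightarrow> hom (Suc n) (ext F z)"
proof -
  assume F: "homg F" and z: "hom n z"
  show ?thesis unfolding hom_def
  proof (intro allI impI)
    fix w assume nz: "ext F z w \<noteq> 0"
    obtain v where "lw v" "z v \<noteq> 0" "F v w \<noteq> 0" using nz by (rule ext_nz)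
    then show "lw w \<and> length w = Suc n" using F z unfolding homg_def hom_def by metis
  qed
qed

lemma hom_sum: "finite S \<Longrightarrow> (\<And>s. s \<in> S \<Longrightarrow> hom n (f s)) \<Longrightarrow> hom n (\<Sum>s\<in>S. f s)"
  by (induct S rule: finite_induct) (auto intro: hom_add hom_zero)

lemma ext_hom_sum:
  assumes g: "good F" and z: "hom n z"
  shows "ext F z = (\<Sum>v\<in>W n. nc_scale (z v) (F v))"
proof
  fix w
  show "ext F z w = (\<Sum>v\<in>W n. nc_scale (z v) (F v)) w"
  proof (cases "n \<le> length w")
    case True
    have "ext F z w = (\<Sum>v\<in>Wd (length w). z v * F v w)" by (simp add: ext_def)
    also have "\<dots> = (\<Sum>v\<in>W n. z v * F v w)"
    proof (rule sum.mono_neutral_right)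
      show "W n \<subseteq> Wd (length w)" using True by (auto simp: W_def Wd_def)
      show "\<forall>v\<in>Wd (length w) - W n. z v * F v w = 0"
        using z by (auto simp: hom_def W_def Wd_def)
    qed simp
    finally show ?thesis by (simp add: sum_fun_apply nc_scale_def)
  next
    case False
    have "ext F z w = (\<Sum>v\<in>Wd (length w). z v * F v w)" by (simp add: ext_def)
    also have "\<dots> = 0"
      using z False by (intro sum.neutral) (auto simp: hom_def Wd_def)
    also have "\<dots> = (\<Sum>v\<in>W n. z v * F v w)"
      using g False by (intro sum.neutral[symmetric]) (auto simp: good_def dge_def W_def)
    finally show ?thesis by (simp add: sum_fun_apply nc_scale_def)
  qed
qed

lemma hom_expand: "hom n z \<Longrightarrow> z = (\<Sum>v\<in>W n. nc_scale (z v) (single v))"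
  using ext_hom_sum[OF good_single, of n z] ext_single_z[of z] hom_ls by metis


lemma letters_simps[simp]: "Suc 0 \<in> letters" "1 \<in> letters" "2 \<in> letters" "3 \<in> letters" "4 \<in> letters"
  "5 \<in> letters" "6 \<in> letters" "7 \<in> letters"
  by (auto simp: letters_def)

fun L6 :: "nat list \<Rightarrow> 'k::field ncpoly" where
  "L6 [] = single [6]"
| "L6 (a # v) = (if a = 1 then pre 1 (L6 v) + (single (4#3#v) - single (3#4#v)
      + single (5#2#v) - single (2#5#v)) else single (6#a#v))"

lemma homg_L6: "homg (L6 :: nat list \<Rightarrow> 'k::field ncpoly)"
  unfolding homg_def
proof (intro allI impI)
  fix v :: "nat list" assume "lw v"
  then show "hom (Suc (length v)) (L6 v :: 'k ncpoly)"
  proof (induct v)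
    case Nil then show ?case using hom_single[of "[6]"] by simp
  next
    case (Cons a v)
    then have a: "a \<in> letters" and v: "lw v" by auto
    show ?case
    proof (cases "a = 1")
      case True
      have h: "hom (Suc (Suc (length v))) (single (b # c # v) :: 'k ncpoly)" if "b \<in> letters" "c \<in> letters" for b c
        using hom_single[of "b#c#v"] that v by simp
      have e: "(L6 (a # v) :: 'k ncpoly) = pre 1 (L6 v) + (single (4#3#v) - single (3#4#v)
          + single (5#2#v) - single (2#5#v))" using True by simp
      note ih = Cons.hyps[OF v]
      show ?thesis unfolding e length_Cons
        by (intro hom_add hom_diff h hom_pre ih) (simp_all add: letters_def)
    next
      case False
      then show ?thesis using hom_single[of "6#a#v"] a v by simp
    qed
  qed
qed

lemma good_L6: "good L6" by (rule homg_good[OF homg_L6])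

definition Lo :: "nat \<Rightarrow> 'k::field ncpoly \<Rightarrow> 'k ncpoly" where
  "Lo a = (if a = 6 then ext L6 else pre a)"

lemma Lo_simps[simp]: "Lo 6 = ext L6" "a \<noteq> 6 \<Longrightarrow> Lo a = pre a"
  by (simp_all add: Lo_def)

lemma lin_Lo: "a \<in> letters \<Longrightarrow> lin (Lo a)"
  by (simp add: Lo_def lin_ext[OF good_L6] lin_pre)

lemma hom_Lo: "a \<in> letters \<Longrightarrow> hom n z \<Longrightarrow> hom (Suc n) (Lo a z)"
  by (simp add: Lo_def hom_ext[OF homg_L6] hom_pre)

definition Dop :: "nat \<Rightarrow> 'k::field ncpoly \<Rightarrow> 'k ncpoly" where
  "Dop j = (if j = 6 then (\<lambda>z. Lo 2 (Lo 3 z) - Lo 3 (Lo 2 z) + Lo 4 (Lo 5 z) - Lo 5 (Lo 4 z))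
   else if j = 5 then (\<lambda>z. Lo 1 (Lo 3 z) - Lo 3 (Lo 1 z) - Lo 4 (Lo 6 z) + Lo 6 (Lo 4 z))
   else if j = 4 then (\<lambda>z. Lo 2 (Lo 1 z) - Lo 1 (Lo 2 z) + Lo 5 (Lo 6 z) - Lo 6 (Lo 5 z))
   else if j = 3 then (\<lambda>z. Lo 5 (Lo 1 z) - Lo 1 (Lo 5 z) - Lo 2 (Lo 6 z) + Lo 6 (Lo 2 z))
   else if j = 2 then (\<lambda>z. Lo 1 (Lo 4 z) + Lo 3 (Lo 6 z) - Lo 4 (Lo 1 z) - Lo 6 (Lo 3 z))
   else (\<lambda>z. Lo 3 (Lo 5 z) - Lo 2 (Lo 4 z) + Lo 4 (Lo 2 z) - Lo 5 (Lo 3 z)))"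

lemma lin_if: "(c \<Longrightarrow> lin a) \<Longrightarrow> (\<not> c \<Longrightarrow> lin b) \<Longrightarrow> lin (if c then a else b)"
  by auto

definition homop :: "('k::field ncpoly \<Rightarrow> 'k ncpoly) \<Rightarrow> bool" where
  "homop T \<longleftrightarrow> (\<forall>n z. hom n z \<longrightarrow> hom (Suc (Suc n)) (T z))"

lemma homop_if: "(c \<Longrightarrow> homop a) \<Longrightarrow> (\<not> c \<Longrightarrow> homop b) \<Longrightarrow> homop (if c then a else b)"
  by auto

lemma lin_LoLo: "a \<in> letters \<Longrightarrow> b \<in> letters \<Longrightarrow> lin (\<lambda>z. Lo a (Lo b z))"
  by (rule lin_comp) (simp_all add: lin_Lo)

lemma lin_Dop: "lin (Dop j)"
  unfolding Dop_def
  apply (intro lin_if)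
  apply (intro lin_add lin_diff lin_LoLo; simp)+
  done

lemma hom_LoLo: "a \<in> letters \<Longrightarrow> b \<in> letters \<Longrightarrow> hom n z \<Longrightarrow> hom (Suc (Suc n)) (Lo a (Lo b z))"
  by (intro hom_Lo) simp_all

lemma hom_Dop_aux: "homop (Dop j)"
  unfolding Dop_def
  apply (intro homop_if)
  apply (unfold homop_def; intro allI impI hom_add hom_diff hom_LoLo; simp)+
  done

lemma hom_Dop: "hom n z \<Longrightarrow> hom (Suc (Suc n)) (Dop j z)"
  using hom_Dop_aux unfolding homop_def by blast

fun L7 :: "nat list \<Rightarrow> 'k::field ncpoly" where
  "L7 [] = single [7]"
| "L7 (a # v) = (if a = 7 then single (7#7#v) else Lo a (L7 v) + Dop a (single v))"

lemma homg_L7: "homg (L7 :: nat list \<Rightarrow> 'k::field ncpoly)"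
  unfolding homg_def
proof (intro allI impI)
  fix v :: "nat list" assume "lw v"
  then show "hom (Suc (length v)) (L7 v :: 'k ncpoly)"
  proof (induct v)
    case Nil then show ?case using hom_single[of "[7]"] by simp
  next
    case (Cons a v)
    then have a: "a \<in> letters" and v: "lw v" by auto
    show ?case
    proof (cases "a = 7")
      case True
      then show ?thesis using hom_single[of "7#7#v"] v by simp
    next
      case False
      have e: "(L7 (a # v) :: 'k ncpoly) = Lo a (L7 v) + Dop a (single v)" using False by simp
      note ih = Cons.hyps[OF v]
      show ?thesis unfolding e length_Cons
        by (intro hom_add hom_Lo hom_Dop hom_single ih a v)
    qed
  qed
qed

lemma good_L7: "good L7" by (rule homg_good[OF homg_L7])

definition Lop :: "nat \<Rightarrow> 'k::field ncpoly \<Rightarrow> 'k ncpoly" where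
  "Lop a = (if a = 7 then ext L7 else Lo a)"

lemma Lop_simps[simp]: "Lop 7 = ext L7" "a \<noteq> 7 \<Longrightarrow> Lop a = Lo a"
  by (simp_all add: Lop_def)

lemma lin_Lop: "a \<in> letters \<Longrightarrow> lin (Lop a)"
  by (simp add: Lop_def lin_ext[OF good_L7] lin_Lo)

lemma hom_Lop: "a \<in> letters \<Longrightarrow> hom n z \<Longrightarrow> hom (Suc n) (Lop a z)"
  by (simp add: Lop_def hom_ext[OF homg_L7] hom_Lo)


lemma lin_eqI:
  assumes S: "lin S" and T: "lin T" and b: "\<And>v. lw v \<Longrightarrow> S (single v) = T (single v)"
    and y: "ls y"
  shows "S y = T y"
proof -
  have "S y = ext (\<lambda>v. S (single v)) y" by (rule lin_basis[OF S y])
  also have "\<dots> = ext (\<lambda>v. T (single v)) y" by (rule ext_cong_basis) (rule b)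
  also have "\<dots> = T y" by (rule lin_basis[OF T y, symmetric])
  finally show ?thesis .
qed

lemma Lo_single: "a \<noteq> 6 \<Longrightarrow> Lo a (single v) = single (a # v)"
  by (simp add: pre_single)


lemma Lo6_single: "lw v \<Longrightarrow> Lo 6 (single v) = L6 v"
  by (simp add: ext_single_F good_L6)

lemma L7_single: "lw v \<Longrightarrow> ext L7 (single v) = L7 v"
  by (simp add: ext_single_F good_L7)

abbreviation K :: "'k::field ncpoly \<Rightarrow> 'k ncpoly" where "K \<equiv> ext L7"

lemma lin_K: "lin K" by (rule lin_ext[OF good_L7])

lemma lin_Lo': "lin (Lo 1)" "lin (Lo 2)" "lin (Lo 3)" "lin (Lo 4)" "lin (Lo 5)" "lin (Lo 6)"
  by (rule lin_Lo, simp)+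

definition Qop :: "'k::field ncpoly \<Rightarrow> 'k ncpoly" where
  "Qop y = Lo 4 (Lo 3 y) - Lo 3 (Lo 4 y) + Lo 5 (Lo 2 y) - Lo 2 (Lo 5 y)"

lemma lin_Qop: "lin Qop"
  unfolding Qop_def[abs_def]
  by (intro lin_add lin_diff lin_LoLo; simp)

lemma R7: "ls y \<Longrightarrow> Lo 6 (Lo 1 y) = Lo 1 (Lo 6 y) + Qop y"
proof (rule lin_eqI[where S="\<lambda>y. Lo 6 (Lo 1 y)" and T="\<lambda>y. Lo 1 (Lo 6 y) + Qop y"])
  show "lin (\<lambda>y. Lo 6 (Lo 1 y))" by (rule lin_LoLo) simp_all
  show "lin (\<lambda>y. Lo 1 (Lo 6 y) + Qop y)" by (intro lin_add lin_LoLo lin_Qop) simp_all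
  fix v :: "nat list" assume v: "lw v"
  have "Lo 6 (Lo 1 (single v)) = ext L6 (single (1 # v) :: 'a ncpoly)"
    by (simp add: pre_single)
  also have "\<dots> = L6 (1 # v)"
    by (rule ext_single_F[OF good_L6]) (simp add: v)
  also have "\<dots> = Lo 1 (Lo 6 (single v)) + Qop (single v)"
  proof -
    have e1: "L6 (1 # v) = pre 1 (L6 v) + (single (4#3#v) - single (3#4#v)
      + single (5#2#v) - (single (2#5#v) :: 'a ncpoly))" by simp
    have e2: "Lo 1 (Lo 6 (single v)) = pre 1 (L6 v :: 'a ncpoly)"
      by (simp add: ext_single_F[OF good_L6 v])
    have e3: "Qop (single v) = single (4#3#v) - single (3#4#v)
      + single (5#2#v) - (single (2#5#v) :: 'a ncpoly)"
      by (simp add: Qop_def pre_single)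
    show ?thesis unfolding e1 e2 e3 ..
  qed
  finally show "Lo 6 (Lo 1 (single v)) = Lo 1 (Lo 6 (single v)) + (Qop (single v) :: 'a ncpoly)" .
qed


lemma R7': "ls y \<Longrightarrow> Lo 6 (Lo 1 y) = Lo 1 (Lo 6 y) + (Lo 4 (Lo 3 y) - Lo 3 (Lo 4 y) + Lo 5 (Lo 2 y) - Lo 2 (Lo 5 y))"
  using R7 by (simp add: Qop_def)

lemma Rj:
  assumes j: "j \<in> {1,2,3,4,5}" and y: "ls y"
  shows "K (Lo j y) = Lo j (K y) + Dop j y"
proof (rule lin_eqI[where S="\<lambda>y. K (Lo j y)" and T="\<lambda>y. Lo j (K y) + Dop j y", OF _ _ _ y])
  have jl: "j \<in> letters" and j6: "j \<noteq> 6" and j7: "j \<noteq> 7" using j by (auto simp: letters_def)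
  show "lin (\<lambda>y. K (Lo j y))" by (rule lin_comp[OF lin_K lin_Lo[OF jl]])
  show "lin (\<lambda>y. Lo j (K y) + Dop j y)" by (rule lin_add[OF lin_comp[OF lin_Lo[OF jl] lin_K] lin_Dop])
  fix v :: "nat list" assume v: "lw v"
  show "K (Lo j (single v)) = Lo j (K (single v)) + Dop j (single v)"
  proof -
    have "K (Lo j (single v)) = K (single (j # v))" using j6 by (simp add: pre_single)
    also have "\<dots> = L7 (j # v)" by (rule ext_single_F[OF good_L7]) (simp add: v jl)
    also have "\<dots> = Lo j (L7 v) + Dop j (single v)" using j7 by simp
    also have "\<dots> = Lo j (K (single v)) + Dop j (single v)"
      by (simp add: ext_single_F[OF good_L7 v])
    finally show ?thesis .
  qed
qed

lemma pre_diff: "pre a (f - g) = pre a f - pre a g"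
  by (auto simp: pre_def split: list.split)
lemma ext_diff: "ext F (f - g) = ext F f - ext F g"
  by (auto simp: ext_def algebra_simps sum_subtractf)

lemma Dop_simps:
  "Dop 1 y = Lo 3 (Lo 5 y) - Lo 2 (Lo 4 y) + Lo 4 (Lo 2 y) - Lo 5 (Lo 3 y)"
  "Dop 2 y = Lo 1 (Lo 4 y) + Lo 3 (Lo 6 y) - Lo 4 (Lo 1 y) - Lo 6 (Lo 3 y)"
  "Dop 3 y = Lo 5 (Lo 1 y) - Lo 1 (Lo 5 y) - Lo 2 (Lo 6 y) + Lo 6 (Lo 2 y)"
  "Dop 4 y = Lo 2 (Lo 1 y) - Lo 1 (Lo 2 y) + Lo 5 (Lo 6 y) - Lo 6 (Lo 5 y)"
  "Dop 5 y = Lo 1 (Lo 3 y) - Lo 3 (Lo 1 y) - Lo 4 (Lo 6 y) + Lo 6 (Lo 4 y)"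
  "Dop 6 y = Lo 2 (Lo 3 y) - Lo 3 (Lo 2 y) + Lo 4 (Lo 5 y) - Lo 5 (Lo 4 y)"
  by (simp_all add: Dop_def del: Lo_simps)

lemma ls_Lo: "a \<in> letters \<Longrightarrow> ls y \<Longrightarrow> ls (Lo a y)"
  by (rule lin_lsD[OF lin_Lo])
lemma ls_K: "ls y \<Longrightarrow> ls (K y)"
  by (rule lin_lsD[OF lin_K])
lemma ls_Dop: "ls y \<Longrightarrow> ls (Dop j y)"
  by (rule lin_lsD[OF lin_Dop])

lemma K_add: "K (f + g) = K f + K g" by (rule ext_add)
lemma K_diff: "K (f - g) = K f - K g" by (rule ext_diff)
lemma Lo_add: "Lo a (f + g) = Lo a f + Lo a g"
  by (simp add: Lo_def pre_add ext_add)
lemma Lo_diff: "Lo a (f - g) = Lo a f - Lo a g"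
  by (simp add: Lo_def pre_diff ext_diff)

lemma KLoLo:
  assumes a: "a \<in> {1,2,3,4,5}" and b: "b \<in> {1,2,3,4,5}" and y: "ls y"
  shows "K (Lo a (Lo b y)) = Lo a (Lo b (K y) + Dop b y) + Dop a (Lo b y)"
proof -
  have bl: "b \<in> letters" using b by (auto simp: letters_def)
  have "K (Lo a (Lo b y)) = Lo a (K (Lo b y)) + Dop a (Lo b y)"
    by (rule Rj[OF a ls_Lo[OF bl y]])
  also have "K (Lo b y) = Lo b (K y) + Dop b y" by (rule Rj[OF b y])
  finally show ?thesis .
qed

lemma L7L6:
  fixes v :: "nat list"
  shows "lw v \<Longrightarrow> K (L6 v :: 'k::field ncpoly) = Lo 6 (L7 v) + Dop 6 (single v)"
proof (induct v)
  case Nil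
  have "K (L6 [] :: 'k ncpoly) = L7 [6]"
    by (simp add: ext_single_F[OF good_L7])
  then show ?case by simp
next
  case (Cons a v)
  then have al: "a \<in> letters" and v: "lw v" by auto
  note IH = Cons.hyps[OF v]
  show ?case
  proof (cases "a = 1")
    case False
    have "K (L6 (a # v) :: 'k ncpoly) = K (single (6 # a # v))" using False by simp
    also have "\<dots> = L7 (6 # a # v)" by (rule ext_single_F[OF good_L7]) (simp add: v al)
    also have "\<dots> = Lo 6 (L7 (a # v)) + Dop 6 (single (a # v))" by simp
    finally show ?thesis .
  next
    case True
    define s :: "'k ncpoly" where "s = single v"
    define t :: "'k ncpoly" where "t = L7 v"
    have ls_s: "ls s" using v by (simp add: s_def)
    have ls_t: "ls t" unfolding t_def using homg_L7 v by (auto simp: homg_def intro: hom_ls)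
    have Ks: "K s = t" unfolding s_def t_def by (rule ext_single_F[OF good_L7 v])
    have L6s: "Lo 6 s = L6 v" unfolding s_def by (simp add: ext_single_F[OF good_L6 v])
    have e1: "L6 (a # v) = Lo 1 (Lo 6 s) + (Lo 4 (Lo 3 s) - Lo 3 (Lo 4 s) + Lo 5 (Lo 2 s) - Lo 2 (Lo 5 s))"
      using True unfolding L6s by (simp add: s_def pre_single del: Lo_simps) (simp add: pre_single)
    have "K (L6 (a # v)) = K (Lo 1 (Lo 6 s)) + (K (Lo 4 (Lo 3 s)) - K (Lo 3 (Lo 4 s)) + K (Lo 5 (Lo 2 s)) - K (Lo 2 (Lo 5 s)))"
      unfolding e1 K_add K_diff ..
    also have "K (Lo 1 (Lo 6 s)) = Lo 1 (Lo 6 t + Dop 6 s) + Dop 1 (Lo 6 s)"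
    proof -
      have "K (Lo 1 (Lo 6 s)) = Lo 1 (K (Lo 6 s)) + Dop 1 (Lo 6 s)"
        by (rule Rj) (simp_all add: ls_ext good_L6)
      moreover have "K (Lo 6 s) = Lo 6 t + Dop 6 s"
        by (simp only: L6s IH t_def[symmetric] s_def[symmetric])
      ultimately show ?thesis by (simp only:)
    qed
    also have "K (Lo 4 (Lo 3 s)) = Lo 4 (Lo 3 t + Dop 3 s) + Dop 4 (Lo 3 s)"
      using KLoLo[of 4 3 s] ls_s Ks by simp
    also have "K (Lo 3 (Lo 4 s)) = Lo 3 (Lo 4 t + Dop 4 s) + Dop 3 (Lo 4 s)"
      using KLoLo[of 3 4 s] ls_s Ks by simp
    also have "K (Lo 5 (Lo 2 s)) = Lo 5 (Lo 2 t + Dop 2 s) + Dop 5 (Lo 2 s)"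
      using KLoLo[of 5 2 s] ls_s Ks by simp
    also have "K (Lo 2 (Lo 5 s)) = Lo 2 (Lo 5 t + Dop 5 s) + Dop 2 (Lo 5 s)"
      using KLoLo[of 2 5 s] ls_s Ks by simp
    finally have L: "K (L6 (a # v)) = Lo 1 (Lo 6 t + Dop 6 s) + Dop 1 (Lo 6 s) +
      (Lo 4 (Lo 3 t + Dop 3 s) + Dop 4 (Lo 3 s) - (Lo 3 (Lo 4 t + Dop 4 s) + Dop 3 (Lo 4 s)) +
       (Lo 5 (Lo 2 t + Dop 2 s) + Dop 5 (Lo 2 s)) - (Lo 2 (Lo 5 t + Dop 5 s) + Dop 2 (Lo 5 s)))" .
    have "Lo 6 (L7 (a # v)) + Dop 6 (single (a # v)) = Lo 6 (Lo 1 t + Dop 1 s) + Dop 6 (Lo 1 s)"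
      using True by (simp add: s_def t_def pre_single del: Lo_simps) (simp add: pre_single)
    also have "Lo 6 (Lo 1 t + Dop 1 s) = Lo 1 (Lo 6 t) + (Lo 4 (Lo 3 t) - Lo 3 (Lo 4 t) + Lo 5 (Lo 2 t) - Lo 2 (Lo 5 t)) + Lo 6 (Dop 1 s)"
      unfolding Lo_add R7'[OF ls_t] ..
    finally have R: "Lo 6 (L7 (a # v)) + Dop 6 (single (a # v)) = Lo 1 (Lo 6 t) + (Lo 4 (Lo 3 t) - Lo 3 (Lo 4 t) + Lo 5 (Lo 2 t) - Lo 2 (Lo 5 t)) + Lo 6 (Dop 1 s) + Dop 6 (Lo 1 s)" .
    show ?thesis unfolding L R
      by (simp only: Dop_simps Lo_add Lo_diff) (simp add: algebra_simps del: Lo_simps)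
  qed
qed


lemma R6: "ls y \<Longrightarrow> K (Lo 6 y) = Lo 6 (K y) + Dop 6 y"
proof (rule lin_eqI[where S="\<lambda>y. K (Lo 6 y)" and T="\<lambda>y. Lo 6 (K y) + Dop 6 y"])
  show "lin (\<lambda>y. K (Lo 6 y))" by (rule lin_comp[OF lin_K lin_Lo]) simp
  show "lin (\<lambda>y. Lo 6 (K y) + Dop 6 y)" by (rule lin_add[OF lin_comp[OF lin_Lo lin_K] lin_Dop]) simp
  fix v :: "nat list" assume v: "lw v"
  have "K (Lo 6 (single v)) = K (L6 v :: 'a ncpoly)"
    by (simp add: ext_single_F[OF good_L6 v])
  also have "\<dots> = Lo 6 (L7 v) + Dop 6 (single v)" by (rule L7L6[OF v])
  also have "\<dots> = Lo 6 (K (single v)) + Dop 6 (single v)"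
    by (simp add: ext_single_F[OF good_L7 v])
  finally show "K (Lo 6 (single v)) = Lo 6 (K (single v)) + (Dop 6 (single v) :: 'a ncpoly)" .
qed

fun op :: "nat list \<Rightarrow> 'k::field ncpoly \<Rightarrow> 'k ncpoly" where
  "op [] z = z"
| "op (a # w) z = Lop a (op w z)"

definition act :: "'k::field ncpoly \<Rightarrow> 'k ncpoly \<Rightarrow> 'k ncpoly" where
  "act f z = ext (\<lambda>v. op v z) f"

lemma nc_scale_simps[simp]: "nc_scale 0 f = 0" "nc_scale 1 f = f" "nc_scale (-1) f = - f"
  by (auto simp: nc_scale_def fun_eq_iff)

lemma letters_eq: "letters = {1,2,3,4,5,6,7}" by (auto simp: letters_def)

lemma gen_mult: "nc_mult (gen m) (gen n) = (single [m, n] :: 'k::field ncpoly)"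
proof
  fix w :: "nat list"
  have "nc_mult (gen m) (gen n) w = (\<Sum>i\<le>length w. (if take i w = [m] then 1 else 0) * (if drop i w = [n] then (1::'k) else 0))"
    by (simp add: nc_mult_def gen_def)
  also have "\<dots> = (\<Sum>i\<le>length w. if i = 1 \<and> w = [m, n] then 1 else 0)"
  proof (rule sum.cong[OF refl])
    fix i assume "i \<in> {..length w}"
    have "(take i w = [m] \<and> drop i w = [n]) \<longleftrightarrow> (i = 1 \<and> w = [m, n])"
    proof
      assume h: "take i w = [m] \<and> drop i w = [n]"
      then have "w = [m, n]" by (metis append_Cons append_Nil append_take_drop_id)
      moreover have "length (take i w) = 1" using h by simp
      then have "i = 1" using \<open>w = [m,n]\<close> by simp
      ultimately show "i = 1 \<and> w = [m, n]" by simp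
    qed auto
    then show "(if take i w = [m] then 1 else 0) * (if drop i w = [n] then (1::'k) else 0) = (if i = 1 \<and> w = [m, n] then 1 else 0)"
      by auto
  qed
  also have "\<dots> = (single [m, n] w :: 'k)"
    by (auto simp: single_def sum.delta)
  finally show "nc_mult (gen m) (gen n) w = (single [m, n] w :: 'k)" .
qed

lemma rel_expand: "rel i = (\<Sum>m\<in>letters. \<Sum>n\<in>letters. nc_scale (of_int (eps i m n)) (single [m, n] :: 'k::field ncpoly))"
  by (simp add: rel_def gen_mult[symmetric] sum_fun_apply nc_scale_def fun_eq_iff)

lemma op_Nil_fun: "op [] = (\<lambda>z. z)" by (rule ext) simp
lemma op_Cons_fun: "op (a # w) = (\<lambda>z. Lop a (op w z))" by (rule ext) simp

lemma lin_op: "lw w \<Longrightarrow> lin (op w)"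
proof (induct w)
  case Nil show ?case unfolding op_Nil_fun by (rule lin_id)
next
  case (Cons a w)
  then show ?case unfolding op_Cons_fun by (intro lin_comp[OF lin_Lop]) auto
qed

lemma op_append: "op (u @ v) z = op u (op v z)"
  by (induct u) auto

lemma dge_ext_raise: "homg F \<Longrightarrow> dge n z \<Longrightarrow> dge (Suc n) (ext F z)"
proof -
  assume F: "homg F" and z: "dge n z"
  show ?thesis unfolding dge_def
  proof (intro allI impI)
    fix w assume nz: "ext F z w \<noteq> 0"
    obtain v where "lw v" "z v \<noteq> 0" "F v w \<noteq> 0" using nz by (rule ext_nz)
    then show "Suc n \<le> length w" using F z unfolding homg_def hom_def dge_def by fastforce
  qed
qed

lemma dge_pre_raise: "dge n z \<Longrightarrow> dge (Suc n) (pre a z)"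
  unfolding dge_def pre_def by (auto split: list.split if_splits)

lemma dge_Lop: "dge n z \<Longrightarrow> dge (Suc n) (Lop a z)"
  by (simp add: Lop_def Lo_def dge_ext_raise homg_L6 homg_L7 dge_pre_raise)

lemma dge_op: "dge n z \<Longrightarrow> dge (n + length w) (op w z)"
  by (induct w) (auto simp: dge_Lop)

lemma hom_op: "lw w \<Longrightarrow> hom n z \<Longrightarrow> hom (n + length w) (op w z)"
  by (induct w) (auto simp: hom_Lop)

lemma dge_0: "dge 0 z" by (simp add: dge_def)

lemma good_op: "ls z \<Longrightarrow> good (\<lambda>v. op v z)"
  unfolding good_def
proof (intro allI impI conjI)
  fix v :: "nat list" assume z: "ls z" and v: "lw v"
  show "ls (op v z)" by (rule lin_lsD[OF lin_op[OF v] z])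
  show "dge (length v) (op v z)" using dge_op[OF dge_0[of z], of v] by simp
qed

lemma act_add: "act (f + g) z = act f z + act g z"
  by (simp add: act_def ext_add)

lemma act_zero: "act 0 z = 0"
  by (simp add: act_def ext_def fun_eq_iff)

lemma ext_zero: "ext F 0 = 0"
  by (simp add: ext_def fun_eq_iff)

lemma ext_sum: "ext F (\<Sum>s\<in>S. g s) = (\<Sum>s\<in>S. ext F (g s))"
proof (induct S rule: infinite_finite_induct)
  case (infinite A) then show ?case by (simp only: sum.infinite[OF infinite] ext_zero)
next
  case empty then show ?case by (simp only: sum.empty ext_zero)
next
  case (insert x A) then show ?case by (simp only: sum.insert[OF insert(1,2)] ext_add insert(3))
qed

lemma act_single: "lw u \<Longrightarrow> ls z \<Longrightarrow> act (single u) z = op u z"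
  unfolding act_def by (rule ext_single_F[OF good_op])

lemma act_rel: "ls z \<Longrightarrow> act (rel i) z = (\<Sum>m\<in>letters. \<Sum>n\<in>letters. nc_scale (of_int (eps i m n)) (Lop m (Lop n z)))"
proof -
  assume z: "ls z"
  have "act (rel i) z = (\<Sum>m\<in>letters. \<Sum>n\<in>letters. nc_scale (of_int (eps i m n)) (act (single [m, n]) z))"
    unfolding rel_expand act_def by (simp add: ext_sum ext_scale)
  also have "\<dots> = (\<Sum>m\<in>letters. \<Sum>n\<in>letters. nc_scale (of_int (eps i m n)) (Lop m (Lop n z)))"
    by (intro sum.cong refl) (simp add: act_single z)
  finally show ?thesis .
qed

lemma RK: "j \<in> {1,2,3,4,5,6} \<Longrightarrow> ls y \<Longrightarrow> K (Lo j y) = Lo j (K y) + Dop j y"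
  using Rj[of j y] R6[of y] by auto

lemma sum_letters: "(\<Sum>m\<in>letters. f m) = f 1 + f 2 + f 3 + f 4 + f 5 + f 6 + f 7"
  by (simp add: letters_eq add_ac)

lemma ann_rel:
  assumes i: "i \<in> letters" and z: "ls z"
  shows "act (rel i) z = (0 :: 'k::field ncpoly)"
proof -
  note R = RK[of 1 z, OF _ z] RK[of 2 z, OF _ z] RK[of 3 z, OF _ z] RK[of 4 z, OF _ z]
    RK[of 5 z, OF _ z] RK[of 6 z, OF _ z] R7'[OF z] RK[of 1 z, OF _ z, unfolded One_nat_def]
    R7'[OF z, unfolded One_nat_def] Dop_simps(1)[unfolded One_nat_def]
  have "i = 1 \<or> i = 2 \<or> i = 3 \<or> i = 4 \<or> i = 5 \<or> i = 6 \<or> i = 7" using i by (auto simp: letters_def)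
  then show ?thesis
    unfolding act_rel[OF z] sum_letters
    by (elim disjE; simp add: eps_def cyc_line_def fano_lines_def R Dop_simps del: Lo_simps)
qed


lemma sum_split_words:
  "(\<Sum>w\<in>Wd N. \<Sum>i\<le>length w. h (take i w) (drop i w)) =
   (\<Sum>u\<in>Wd N. \<Sum>v\<in>Wd N. if length u + length v \<le> N then h u v else (0::'a::comm_monoid_add))"
proof -
  have "(\<Sum>w\<in>Wd N. \<Sum>i\<le>length w. h (take i w) (drop i w)) =
        (\<Sum>(w, i)\<in>(SIGMA w:Wd N. {..length w}). h (take i w) (drop i w))"
    by (rule sum.Sigma) auto
  also have "\<dots> = (\<Sum>(u, v)\<in>{(u, v). u \<in> Wd N \<and> v \<in> Wd N \<and> length u + length v \<le> N}. h u v)"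
  proof (rule sum.reindex_bij_witness[where i="\<lambda>(u, v). (u @ v, length u)" and j="\<lambda>(w, i). (take i w, drop i w)"])
    show "\<And>a. a \<in> (SIGMA w:Wd N. {..length w}) \<Longrightarrow>
      (case case a of (w, i) \<Rightarrow> (take i w, drop i w) of (u, v) \<Rightarrow> (u @ v, length u)) = a"
      by auto
    show "\<And>a. a \<in> (SIGMA w:Wd N. {..length w}) \<Longrightarrow>
      (case a of (w, i) \<Rightarrow> (take i w, drop i w)) \<in> {(u, v). u \<in> Wd N \<and> v \<in> Wd N \<and> length u + length v \<le> N}"
      by (auto simp: Wd_def dest: in_set_takeD in_set_dropD)
    show "\<And>b. b \<in> {(u, v). u \<in> Wd N \<and> v \<in> Wd N \<and> length u + length v \<le> N} \<Longrightarrow>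
      (case case b of (u, v) \<Rightarrow> (u @ v, length u) of (w, i) \<Rightarrow> (take i w, drop i w)) = b"
      by auto
    show "\<And>b. b \<in> {(u, v). u \<in> Wd N \<and> v \<in> Wd N \<and> length u + length v \<le> N} \<Longrightarrow>
      (case b of (u, v) \<Rightarrow> (u @ v, length u)) \<in> (SIGMA w:Wd N. {..length w})"
      by (auto simp: Wd_def)
    show "\<And>a. a \<in> (SIGMA w:Wd N. {..length w}) \<Longrightarrow>
      (case case a of (w, i) \<Rightarrow> (take i w, drop i w) of (u, v) \<Rightarrow> h u v) =
      (case a of (w, i) \<Rightarrow> h (take i w) (drop i w))"
      by auto
  qed
  also have "\<dots> = (\<Sum>p\<in>{p \<in> Wd N \<times> Wd N. length (fst p) + length (snd p) \<le> N}. h (fst p) (snd p))"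
    by (rule sum.cong) auto
  also have "\<dots> = (\<Sum>p\<in>Wd N \<times> Wd N. if length (fst p) + length (snd p) \<le> N then h (fst p) (snd p) else 0)"
    by (rule sum.inter_filter) simp
  also have "\<dots> = (\<Sum>(u, v)\<in>Wd N \<times> Wd N. if length u + length v \<le> N then h u v else 0)"
    by (simp add: split_beta)
  also have "\<dots> = (\<Sum>u\<in>Wd N. \<Sum>v\<in>Wd N. if length u + length v \<le> N then h u v else 0)"
    by (rule sum.cartesian_product[symmetric])
  finally show ?thesis .
qed

lemma op_zero_long: "ls z \<Longrightarrow> length x < length w \<Longrightarrow> op w z x = 0"
  using dge_op[OF dge_0[of z], of w] by (auto simp: dge_def)

lemma act_mult:
  assumes z: "ls z"
  shows "act (nc_mult a f) z = act a (act f z)"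
proof
  fix x :: "nat list"
  define N where "N = length x"
  have "act (nc_mult a f) z x = (\<Sum>w\<in>Wd N. \<Sum>i\<le>length w. a (take i w) * f (drop i w) * op (take i w @ drop i w) z x)"
    by (simp add: act_def ext_def nc_mult_def sum_distrib_right N_def)
  also have "\<dots> = (\<Sum>u\<in>Wd N. \<Sum>v\<in>Wd N. if length u + length v \<le> N then a u * f v * op (u @ v) z x else 0)"
    by (rule sum_split_words)
  also have "\<dots> = (\<Sum>u\<in>Wd N. \<Sum>v\<in>Wd N. a u * (f v * op (u @ v) z x))"
    by (intro sum.cong refl) (auto simp: op_zero_long[OF z] N_def)
  also have "\<dots> = act a (act f z) x"
  proof -
    have "op u (act f z) x = (\<Sum>v\<in>Wd N. f v * op (u @ v) z x)" if u: "u \<in> Wd N" for u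
    proof -
      have lu: "lw u" using u by (simp add: Wd_def)
      have "op u (act f z) = ext (\<lambda>v. op u (op v z)) f"
        unfolding act_def by (rule lin_extD[OF lin_op[OF lu] good_op[OF z]])
      then show ?thesis by (simp add: ext_def op_append N_def)
    qed
    then show ?thesis by (simp add: act_def ext_def N_def sum_distrib_left)
  qed
  finally show "act (nc_mult a f) z x = act a (act f z) x" .
qed


abbreviation I :: "'k::field ncpoly set" where "I \<equiv> rel_ideal"

lemma hom_free: "hom n f \<Longrightarrow> f \<in> free_alg"
proof -
  assume h: "hom n f"
  have "{w. f w \<noteq> 0} \<subseteq> W n" using h by (auto simp: hom_def W_def)
  then have "finite {w. f w \<noteq> 0}" by (rule finite_subset) simp
  then show ?thesis using h by (auto simp: free_alg_def hom_def)
qed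

lemma free_ls: "f \<in> free_alg \<Longrightarrow> ls f"
  by (auto simp: free_alg_def ls_def)

lemma nc_add_eq: "nc_add f g = f + g"
  by (simp add: nc_add_def fun_eq_iff)

lemma free_add: "f \<in> free_alg \<Longrightarrow> g \<in> free_alg \<Longrightarrow> nc_add f g \<in> free_alg"
proof -
  assume f: "f \<in> free_alg" and g: "g \<in> free_alg"
  have "{w. nc_add f g w \<noteq> 0} \<subseteq> {w. f w \<noteq> 0} \<union> {w. g w \<noteq> 0}"
    by (auto simp: nc_add_def)
  then have "finite {w. nc_add f g w \<noteq> 0}"
    by (rule finite_subset) (use f g in \<open>auto simp: free_alg_def\<close>)
  moreover have "\<forall>w. nc_add f g w \<noteq> 0 \<longrightarrow> lw w"
    using f g unfolding free_alg_def nc_add_def by (metis (mono_tags, lifting) add.left_neutral mem_Collect_eq)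
  ultimately show ?thesis by (simp add: free_alg_def)
qed

lemma nc_mult_nz:
  assumes "nc_mult a f w \<noteq> 0"
  obtains i where "i \<le> length w" "a (take i w) \<noteq> 0" "f (drop i w) \<noteq> 0"
proof -
  from assms obtain i where "i \<in> {..length w}" "a (take i w) * f (drop i w) \<noteq> 0"
    unfolding nc_mult_def using sum.not_neutral_contains_not_neutral by blast
  then show ?thesis using that by auto
qed

lemma free_mult: "a \<in> free_alg \<Longrightarrow> f \<in> free_alg \<Longrightarrow> nc_mult a f \<in> free_alg"
proof -
  assume a: "a \<in> free_alg" and f: "f \<in> free_alg"
  let ?S = "(\<lambda>(u, v). u @ v) ` ({w. a w \<noteq> 0} \<times> {w. f w \<noteq> 0})"
  have "{w. nc_mult a f w \<noteq> 0} \<subseteq> ?S"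
  proof
    fix w assume "w \<in> {w. nc_mult a f w \<noteq> 0}"
    then have "nc_mult a f w \<noteq> 0" by simp
    then obtain i where "a (take i w) \<noteq> 0" "f (drop i w) \<noteq> 0"
      by (metis nc_mult_nz)
    then show "w \<in> ?S" by (auto intro!: image_eqI[where x="(take i w, drop i w)"])
  qed
  moreover have "finite ?S" using a f by (auto simp: free_alg_def)
  ultimately have "finite {w. nc_mult a f w \<noteq> 0}" by (rule finite_subset)
  moreover have "lw w" if nz: "nc_mult a f w \<noteq> 0" for w
  proof -
    obtain i where "a (take i w) \<noteq> 0" "f (drop i w) \<noteq> 0" using nz by (metis nc_mult_nz)
    then have "lw (take i w)" "lw (drop i w)" using a f by (auto simp: free_alg_def)
    then show "lw w" by (metis append_take_drop_id set_append Un_subset_iff)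
  qed
  ultimately show ?thesis by (simp add: free_alg_def)
qed

lemma hom_rel: "hom 2 (rel i :: 'k::field ncpoly)"
  unfolding rel_expand
proof (intro hom_sum hom_scale finite_letters)
  fix m n assume "m \<in> letters" "n \<in> letters"
  then show "hom 2 (single [m, n] :: 'k ncpoly)" using hom_single[of "[m, n]"] by (simp add: numeral_2_eq_2)
qed

lemma free_rel: "rel i \<in> free_alg"
  by (rule hom_free[OF hom_rel])

lemma free_zero: "(\<lambda>_. 0) \<in> free_alg"
  by (simp add: free_alg_def)

lemma free_in_family: "free_alg \<in> {J. J \<subseteq> free_alg \<and> (\<lambda>_. 0) \<in> J \<and> (\<forall>i\<in>letters. rel i \<in> J) \<and>
       (\<forall>f\<in>J. \<forall>g\<in>J. nc_add f g \<in> J) \<and>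
       (\<forall>a\<in>free_alg. \<forall>f\<in>J. nc_mult a f \<in> J \<and> nc_mult f a \<in> J)}"
  by (simp add: free_zero free_rel free_add free_mult)

lemma I_free: "I \<subseteq> free_alg"
  unfolding rel_ideal_def using free_in_family by blast

lemma I_zero: "(0::'k::field ncpoly) \<in> I"
  unfolding rel_ideal_def zero_fun_def by blast

lemma I_rel: "i \<in> letters \<Longrightarrow> rel i \<in> I"
  unfolding rel_ideal_def by blast

lemma I_add: "f \<in> I \<Longrightarrow> g \<in> I \<Longrightarrow> f + g \<in> I"
  unfolding rel_ideal_def nc_add_eq[symmetric] by blast

lemma I_multL: "a \<in> free_alg \<Longrightarrow> f \<in> I \<Longrightarrow> nc_mult a f \<in> I"
  unfolding rel_ideal_def by blast

lemma I_multR: "a \<in> free_alg \<Longrightarrow> f \<in> I \<Longrightarrow> nc_mult f a \<in> I"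
  unfolding rel_ideal_def by blast

definition cst :: "'k::field \<Rightarrow> 'k ncpoly" where "cst c = (\<lambda>w. if w = [] then c else 0)"

lemma free_cst: "cst c \<in> free_alg"
proof -
  have "{w. cst c w \<noteq> 0} \<subseteq> {[]}" by (auto simp: cst_def)
  then show ?thesis by (auto simp: free_alg_def cst_def intro: finite_subset)
qed

lemma nc_mult_cst: "nc_mult (cst c) f = nc_scale c f"
proof
  fix w :: "nat list"
  have "nc_mult (cst c) f w = (\<Sum>i\<le>length w. if i = 0 then c * f w else 0)"
    unfolding nc_mult_def cst_def by (intro sum.cong refl) auto
  also have "\<dots> = c * f w" by (simp add: sum.delta)
  finally show "nc_mult (cst c) f w = nc_scale c f w" by (simp add: nc_scale_def)
qed

lemma I_scale: "f \<in> I \<Longrightarrow> nc_scale c f \<in> I"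
  using I_multL[OF free_cst] nc_mult_cst by metis

lemma I_neg: "f \<in> I \<Longrightarrow> - f \<in> I"
  using I_scale[of f "-1"] by simp

lemma I_diff: "f \<in> I \<Longrightarrow> g \<in> I \<Longrightarrow> f - g \<in> I"
  using I_add[OF _ I_neg] by (metis diff_conv_add_uminus)

lemma I_sum: "(\<And>s. s \<in> S \<Longrightarrow> g s \<in> I) \<Longrightarrow> (\<Sum>s\<in>S. g s) \<in> I"
proof (induct S rule: infinite_finite_induct)
  case (infinite A) then show ?case by (simp only: sum.infinite[OF infinite(1)] I_zero)
next
  case empty then show ?case by (simp only: sum.empty I_zero)
next
  case (insert x A)
  have "g x \<in> I" using insert by blast
  moreover have "sum g A \<in> I" using insert by blast
  ultimately show ?case by (simp only: sum.insert[OF insert(1,2)] I_add)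
qed

lemma gen_pre: "nc_mult (gen a) f = pre a f"
proof
  fix w :: "nat list"
  show "nc_mult (gen a) f w = pre a f w"
  proof (cases w)
    case Nil then show ?thesis by (simp add: nc_mult_def gen_def pre_def)
  next
    case (Cons b w')
    have "nc_mult (gen a) f w = (\<Sum>i\<le>length w. if i = 1 then (if b = a then f w' else 0) else 0)"
      unfolding nc_mult_def gen_def
    proof (intro sum.cong refl)
      fix i assume iw: "i \<in> {..length w}"
      show "(if take i w = [a] then 1 else 0) * f (drop i w) = (if i = 1 then (if b = a then f w' else 0) else 0)"
        using Cons iw by (cases i) (auto simp: take_Cons' drop_Cons' Suc_le_eq)
    qed
    also have "\<dots> = (if b = a then f w' else 0)"
      using Cons by (subst sum.delta) auto
    also have "\<dots> = pre a f w" using Cons by (simp add: pre_def)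
    finally show ?thesis .
  qed
qed

lemma free_gen: "a \<in> letters \<Longrightarrow> gen a \<in> free_alg"
  by (auto simp: free_alg_def gen_def)

lemma I_pre: "a \<in> letters \<Longrightarrow> f \<in> I \<Longrightarrow> pre a f \<in> I"
  using I_multL[OF free_gen] gen_pre by metis

definition Jann :: "'k::field ncpoly set" where
  "Jann = {f \<in> free_alg. \<forall>z. ls z \<longrightarrow> act f z = 0}"

lemma ls_act: "ls z \<Longrightarrow> ls (act a z)"
  unfolding act_def by (rule ls_ext[OF good_op])

lemma JannI: "f \<in> free_alg \<Longrightarrow> (\<And>z. ls z \<Longrightarrow> act f z = 0) \<Longrightarrow> f \<in> Jann"
  unfolding Jann_def by blast

lemma JannD: "f \<in> Jann \<Longrightarrow> ls z \<Longrightarrow> act f z = 0"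
  unfolding Jann_def by blast

lemma JannF: "f \<in> Jann \<Longrightarrow> f \<in> free_alg"
  unfolding Jann_def by blast

lemma act_zero_right: "act a 0 = 0"
proof -
  have "act a 0 = ext (\<lambda>v. 0) a"
    unfolding act_def by (rule ext_cong_basis) (rule lin_zero[OF lin_op])
  also have "\<dots> = 0" by (simp add: ext_def fun_eq_iff)
  finally show ?thesis .
qed

lemma I_Jann: "I \<subseteq> (Jann :: 'k::field ncpoly set)"
proof -
  have F1: "(Jann :: 'k ncpoly set) \<subseteq> free_alg" by (auto simp: Jann_def)
  have "(0 :: 'k ncpoly) \<in> Jann"
    by (rule JannI) (simp_all add: act_zero free_zero[unfolded zero_fun_def[symmetric]])
  then have F2: "(\<lambda>_. 0) \<in> (Jann :: 'k ncpoly set)" by (simp add: zero_fun_def)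
  have F3: "\<forall>i\<in>letters. rel i \<in> (Jann :: 'k ncpoly set)"
  proof
    fix i :: nat assume i: "i \<in> letters"
    show "rel i \<in> (Jann :: 'k ncpoly set)"
      by (rule JannI[OF free_rel]) (rule ann_rel[OF i])
  qed
  have F4: "\<forall>f\<in>Jann. \<forall>g\<in>Jann. nc_add f g \<in> (Jann :: 'k ncpoly set)"
  proof (intro ballI)
    fix f g :: "'k ncpoly" assume f: "f \<in> Jann" and g: "g \<in> Jann"
    show "nc_add f g \<in> Jann"
    proof (rule JannI)
      show "nc_add f g \<in> free_alg" by (rule free_add[OF JannF[OF f] JannF[OF g]])
      fix z :: "'k ncpoly" assume z: "ls z"
      show "act (nc_add f g) z = 0"
        unfolding nc_add_eq act_add JannD[OF f z] JannD[OF g z] by simp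
    qed
  qed
  have F5: "\<forall>a\<in>free_alg. \<forall>f\<in>Jann. nc_mult a f \<in> Jann \<and> nc_mult f a \<in> (Jann :: 'k ncpoly set)"
  proof (intro ballI conjI)
    fix a f :: "'k ncpoly" assume a: "a \<in> free_alg" and f: "f \<in> Jann"
    show "nc_mult a f \<in> Jann"
    proof (rule JannI)
      show "nc_mult a f \<in> free_alg" by (rule free_mult[OF a JannF[OF f]])
      fix z :: "'k ncpoly" assume z: "ls z"
      show "act (nc_mult a f) z = 0"
        unfolding act_mult[OF z] JannD[OF f z] by (rule act_zero_right)
    qed
    show "nc_mult f a \<in> Jann"
    proof (rule JannI)
      show "nc_mult f a \<in> free_alg" by (rule free_mult[OF JannF[OF f] a])
      fix z :: "'k ncpoly" assume z: "ls z"
      show "act (nc_mult f a) z = 0"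
        unfolding act_mult[OF z] JannD[OF f ls_act[OF z]] ..
    qed
  qed
  show ?thesis unfolding rel_ideal_def using F1 F2 F3 F4 F5 by blast
qed

lemma I_ann: "f \<in> I \<Longrightarrow> ls z \<Longrightarrow> act f z = 0"
  using I_Jann JannD by blast


definition relw :: "nat \<Rightarrow> nat list \<Rightarrow> 'k::field ncpoly" where
  "relw i v = nc_mult (rel i) (single v)"

lemma free_single: "lw v \<Longrightarrow> single v \<in> free_alg"
  by (rule hom_free[OF hom_single])

lemma I_relw: "i \<in> letters \<Longrightarrow> lw v \<Longrightarrow> relw i v \<in> I"
  unfolding relw_def by (rule I_multR[OF free_single I_rel])

lemma nc_mult_addL: "nc_mult (f + g) h = nc_mult f h + nc_mult g h"
  by (simp add: nc_mult_def fun_eq_iff algebra_simps sum.distrib)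

lemma nc_mult_zeroL: "nc_mult 0 h = 0"
  by (simp add: nc_mult_def fun_eq_iff)

lemma nc_mult_sumL: "nc_mult (\<Sum>s\<in>S. g s) h = (\<Sum>s\<in>S. nc_mult (g s) h)"
proof (induct S rule: infinite_finite_induct)
  case (infinite A) then show ?case by (simp only: sum.infinite[OF infinite(1)] nc_mult_zeroL)
next
  case empty then show ?case by (simp only: sum.empty nc_mult_zeroL)
next
  case (insert x A) then show ?case by (simp only: sum.insert[OF insert(1,2)] nc_mult_addL insert(3))
qed

lemma nc_mult_scaleL: "nc_mult (nc_scale c f) h = nc_scale c (nc_mult f h)"
  by (simp add: nc_mult_def nc_scale_def fun_eq_iff sum_distrib_left mult.assoc)

lemma single_mult: "nc_mult (single u) (single v) = (single (u @ v) :: 'k::field ncpoly)"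
proof
  fix w :: "nat list"
  have "nc_mult (single u) (single v) w = (\<Sum>i\<le>length w. if i = length u \<and> w = u @ v then 1 else (0::'k))"
    unfolding nc_mult_def single_def
  proof (intro sum.cong refl)
    fix i assume iw: "i \<in> {..length w}"
    have "(take i w = u \<and> drop i w = v) \<longleftrightarrow> (i = length u \<and> w = u @ v)"
    proof
      assume h: "take i w = u \<and> drop i w = v"
      then have "w = u @ v" by (metis append_take_drop_id)
      moreover have "length (take i w) = length u" using h by simp
      then have "i = length u" using iw by simp
      ultimately show "i = length u \<and> w = u @ v" by simp
    qed auto
    then show "(if take i w = u then 1 else 0) * (if drop i w = v then 1 else (0::'k)) = (if i = length u \<and> w = u @ v then 1 else 0)"
      by auto
  qed
  also have "\<dots> = (single (u @ v) w :: 'k)"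
    by (auto simp: single_def)
  finally show "nc_mult (single u) (single v) w = (single (u @ v) w :: 'k)" .
qed

lemma relw_expand: "relw i v = (\<Sum>m\<in>letters. \<Sum>n\<in>letters. nc_scale (of_int (eps i m n)) (single (m # n # v) :: 'k::field ncpoly))"
  unfolding relw_def rel_expand
  by (simp add: nc_mult_sumL nc_mult_scaleL single_mult)

definition Pop :: "nat \<Rightarrow> 'k::field ncpoly \<Rightarrow> 'k ncpoly" where
  "Pop j = (if j = 6 then (\<lambda>z. pre 2 (pre 3 z) - pre 3 (pre 2 z) + pre 4 (pre 5 z) - pre 5 (pre 4 z))
   else if j = 5 then (\<lambda>z. pre 1 (pre 3 z) - pre 3 (pre 1 z) - pre 4 (pre 6 z) + pre 6 (pre 4 z))
   else if j = 4 then (\<lambda>z. pre 2 (pre 1 z) - pre 1 (pre 2 z) + pre 5 (pre 6 z) - pre 6 (pre 5 z))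
   else if j = 3 then (\<lambda>z. pre 5 (pre 1 z) - pre 1 (pre 5 z) - pre 2 (pre 6 z) + pre 6 (pre 2 z))
   else if j = 2 then (\<lambda>z. pre 1 (pre 4 z) + pre 3 (pre 6 z) - pre 4 (pre 1 z) - pre 6 (pre 3 z))
   else (\<lambda>z. pre 3 (pre 5 z) - pre 2 (pre 4 z) + pre 4 (pre 2 z) - pre 5 (pre 3 z)))"

lemma Pop_simps:
  "Pop (Suc 0) y = pre 3 (pre 5 y) - pre 2 (pre 4 y) + pre 4 (pre 2 y) - pre 5 (pre 3 y)"
  "Pop 2 y = pre 1 (pre 4 y) + pre 3 (pre 6 y) - pre 4 (pre 1 y) - pre 6 (pre 3 y)"
  "Pop 3 y = pre 5 (pre 1 y) - pre 1 (pre 5 y) - pre 2 (pre 6 y) + pre 6 (pre 2 y)"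
  "Pop 4 y = pre 2 (pre 1 y) - pre 1 (pre 2 y) + pre 5 (pre 6 y) - pre 6 (pre 5 y)"
  "Pop 5 y = pre 1 (pre 3 y) - pre 3 (pre 1 y) - pre 4 (pre 6 y) + pre 6 (pre 4 y)"
  "Pop 6 y = pre 2 (pre 3 y) - pre 3 (pre 2 y) + pre 4 (pre 5 y) - pre 5 (pre 4 y)"
  by (simp_all add: Pop_def)

lemma rel7j:
  assumes j: "j \<in> {1,2,3,4,5,6}" and v: "lw v"
  shows "single (7 # j # v) - single (j # 7 # v) - Pop j (single v) \<in> (I :: 'k::field ncpoly set)"
proof -
  have "j = 1 \<or> j = 2 \<or> j = 3 \<or> j = 4 \<or> j = 5 \<or> j = 6" using j by auto
  then show ?thesis
  proof (elim disjE)
    assume "j = 1"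
    have "single (7 # j # v) - single (j # 7 # v) - Pop j (single v) = (relw 6 v :: 'k ncpoly)"
      unfolding relw_expand sum_letters using \<open>j = 1\<close>
      by (simp add: eps_def cyc_line_def fano_lines_def Pop_simps pre_single algebra_simps)
    then show ?thesis using I_relw[OF _ v, of 6] by simp
  next
    assume "j = 2"
    have "single (7 # j # v) - single (j # 7 # v) - Pop j (single v) = - (relw 5 v :: 'k ncpoly)"
      unfolding relw_expand sum_letters using \<open>j = 2\<close>
      by (simp add: eps_def cyc_line_def fano_lines_def Pop_simps pre_single algebra_simps)
    then show ?thesis using I_neg[OF I_relw[OF _ v, of 5]] by simp
  next
    assume "j = 3"
    have "single (7 # j # v) - single (j # 7 # v) - Pop j (single v) = - (relw 4 v :: 'k ncpoly)"
      unfolding relw_expand sum_letters using \<open>j = 3\<close>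
      by (simp add: eps_def cyc_line_def fano_lines_def Pop_simps pre_single algebra_simps)
    then show ?thesis using I_neg[OF I_relw[OF _ v, of 4]] by simp
  next
    assume "j = 4"
    have "single (7 # j # v) - single (j # 7 # v) - Pop j (single v) = (relw 3 v :: 'k ncpoly)"
      unfolding relw_expand sum_letters using \<open>j = 4\<close>
      by (simp add: eps_def cyc_line_def fano_lines_def Pop_simps pre_single algebra_simps)
    then show ?thesis using I_relw[OF _ v, of 3] by simp
  next
    assume "j = 5"
    have "single (7 # j # v) - single (j # 7 # v) - Pop j (single v) = (relw 2 v :: 'k ncpoly)"
      unfolding relw_expand sum_letters using \<open>j = 5\<close>
      by (simp add: eps_def cyc_line_def fano_lines_def Pop_simps pre_single algebra_simps)
    then show ?thesis using I_relw[OF _ v, of 2] by simp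
  next
    assume "j = 6"
    have "single (7 # j # v) - single (j # 7 # v) - Pop j (single v) = - (relw 1 v :: 'k ncpoly)"
      unfolding relw_expand sum_letters using \<open>j = 6\<close>
      by (simp add: eps_def cyc_line_def fano_lines_def Pop_simps pre_single algebra_simps)
    then show ?thesis using I_neg[OF I_relw[OF _ v, of 1]] by simp
  qed
qed

lemma rel61:
  assumes v: "lw v"
  shows "single (6 # 1 # v) - single (1 # 6 # v) - (single (4#3#v) - single (3#4#v) + single (5#2#v) - single (2#5#v)) \<in> (I :: 'k::field ncpoly set)"
proof -
  have "single (6 # 1 # v) - single (1 # 6 # v) - (single (4#3#v) - single (3#4#v) + single (5#2#v) - single (2#5#v)) = - (relw 7 v :: 'k ncpoly)"
    unfolding relw_expand sum_letters
    by (simp add: eps_def cyc_line_def fano_lines_def algebra_simps)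
  then show ?thesis using I_neg[OF I_relw[OF _ v, of 7]] by simp
qed


lemma I_zero_lam[simp]: "(\<lambda>_. 0) \<in> I"
  using I_zero by (simp add: zero_fun_def)

lemma lin_sum: "lin T \<Longrightarrow> T (\<Sum>s\<in>S. g s) = (\<Sum>s\<in>S. T (g s))"
proof (induct S rule: infinite_finite_induct)
  case (infinite A) then show ?case by (simp only: sum.infinite[OF infinite(1)] lin_zero)
next
  case empty then show ?case by (simp only: sum.empty lin_zero)
next
  case (insert x A) then show ?case by (simp only: sum.insert[OF insert(1,2)] lin_addD)
qed

lemma cong_lift:
  assumes a: "a \<in> letters" and T: "lin T" and y: "hom n y"
    and b: "\<And>v. lw v \<Longrightarrow> length v = n \<Longrightarrow> single (a # v) - T (single v) \<in> I"
  shows "pre a y - T y \<in> I"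
proof -
  have ye: "y = (\<Sum>v\<in>W n. nc_scale (y v) (single v))" by (rule hom_expand[OF y])
  have "pre a y - T y = (\<Sum>v\<in>W n. nc_scale (y v) (single (a # v) - T (single v)))"
    apply (subst (1 2) ye)
    apply (simp only: lin_sum[OF lin_pre[OF a]] lin_sum[OF T] lin_scaleD[OF lin_pre[OF a]]
        lin_scaleD[OF T] pre_single nc_scale_diff sum_subtractf)
    done
  also have "\<dots> \<in> I"
    by (rule I_sum, rule I_scale, rule b) (auto simp: W_def)
  finally show ?thesis .
qed

lemma CL6: "lw v \<Longrightarrow> single (6 # v) - L6 v \<in> (I :: 'k::field ncpoly set)"
proof (induct v)
  case Nil then show ?case by (simp add: I_zero)
next
  case (Cons a v)
  then have al: "a \<in> letters" and v: "lw v" by auto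
  show ?case
  proof (cases "a = 1")
    case False then show ?thesis by (simp add: I_zero)
  next
    case True
    have "single (6 # a # v) - (L6 (a # v) :: 'k ncpoly) =
      pre 1 (single (6 # v) - L6 v) +
      (single (6 # 1 # v) - single (1 # 6 # v) - (single (4#3#v) - single (3#4#v) + single (5#2#v) - single (2#5#v)))"
      using True by (simp add: pre_diff pre_single algebra_simps)
    also have "\<dots> \<in> I"
      by (rule I_add[OF I_pre[OF _ Cons.hyps[OF v]] rel61[OF v]]) simp
    finally show ?thesis .
  qed
qed

lemma CLo: "a \<in> letters \<Longrightarrow> a \<noteq> 7 \<Longrightarrow> hom n y \<Longrightarrow> pre a y - Lo a y \<in> I"
proof (cases "a = 6")
  case True
  assume y: "hom n y"
  have "pre 6 y - ext L6 y \<in> I"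
  proof (rule cong_lift[OF _ lin_ext[OF good_L6] y])
    fix v :: "nat list" assume v: "lw v"
    show "single (6 # v) - ext L6 (single v) \<in> I"
      using CL6[OF v] by (simp add: ext_single_F[OF good_L6 v])
  qed simp
  then show ?thesis using True by simp
qed (simp add: I_zero)

lemma hom_pre_Lo: "a \<in> letters \<Longrightarrow> hom n y \<Longrightarrow> hom (Suc n) (Lo a y)"
  by (rule hom_Lo)

lemma CLL:
  assumes a: "a \<in> letters" "a \<noteq> 7" and b: "b \<in> letters" "b \<noteq> 7" and y: "hom n y"
  shows "pre a (pre b y) - Lo a (Lo b y) \<in> I"
proof -
  have "pre a (pre b y) - Lo a (Lo b y) = pre a (pre b y - Lo b y) + (pre a (Lo b y) - Lo a (Lo b y))"
    by (simp add: pre_diff)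
  also have "\<dots> \<in> I"
    by (rule I_add[OF I_pre[OF a(1) CLo[OF b y]] CLo[OF a hom_Lo[OF b(1) y]]])
  finally show ?thesis .
qed

lemma CPop:
  assumes j: "j \<in> {1,2,3,4,5,6}" and y: "hom n y"
  shows "Pop j y - Dop j y \<in> I"
proof -
  have C: "pre a (pre b y) - Lo a (Lo b y) \<in> I" if "a \<in> {1,2,3,4,5,6}" "b \<in> {1,2,3,4,5,6}" for a b
    using that by (intro CLL[OF _ _ _ _ y]) (auto simp: letters_def)
  have "j = 1 \<or> j = 2 \<or> j = 3 \<or> j = 4 \<or> j = 5 \<or> j = 6" using j by auto
  then show ?thesis
  proof (elim disjE)
    assume "j = 1"
    then have "Pop j y - Dop j y = (pre 3 (pre 5 y) - Lo 3 (Lo 5 y)) - (pre 2 (pre 4 y) - Lo 2 (Lo 4 y))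
      + (pre 4 (pre 2 y) - Lo 4 (Lo 2 y)) - (pre 5 (pre 3 y) - Lo 5 (Lo 3 y))"
      by (simp add: Pop_simps Dop_simps[unfolded One_nat_def] algebra_simps del: Lo_simps)
    then show ?thesis by (simp only:) (intro I_add I_diff C; simp)
  next
    assume "j = 2"
    then have "Pop j y - Dop j y = (pre 1 (pre 4 y) - Lo 1 (Lo 4 y)) + (pre 3 (pre 6 y) - Lo 3 (Lo 6 y))
      - (pre 4 (pre 1 y) - Lo 4 (Lo 1 y)) - (pre 6 (pre 3 y) - Lo 6 (Lo 3 y))"
      by (simp add: Pop_simps Dop_simps algebra_simps del: Lo_simps)
    then show ?thesis by (simp only:) (intro I_add I_diff C; simp)
  next
    assume "j = 3"
    then have "Pop j y - Dop j y = (pre 5 (pre 1 y) - Lo 5 (Lo 1 y)) - (pre 1 (pre 5 y) - Lo 1 (Lo 5 y))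
      - (pre 2 (pre 6 y) - Lo 2 (Lo 6 y)) + (pre 6 (pre 2 y) - Lo 6 (Lo 2 y))"
      by (simp add: Pop_simps Dop_simps algebra_simps del: Lo_simps)
    then show ?thesis by (simp only:) (intro I_add I_diff C; simp)
  next
    assume "j = 4"
    then have "Pop j y - Dop j y = (pre 2 (pre 1 y) - Lo 2 (Lo 1 y)) - (pre 1 (pre 2 y) - Lo 1 (Lo 2 y))
      + (pre 5 (pre 6 y) - Lo 5 (Lo 6 y)) - (pre 6 (pre 5 y) - Lo 6 (Lo 5 y))"
      by (simp add: Pop_simps Dop_simps algebra_simps del: Lo_simps)
    then show ?thesis by (simp only:) (intro I_add I_diff C; simp)
  next
    assume "j = 5"
    then have "Pop j y - Dop j y = (pre 1 (pre 3 y) - Lo 1 (Lo 3 y)) - (pre 3 (pre 1 y) - Lo 3 (Lo 1 y))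
      - (pre 4 (pre 6 y) - Lo 4 (Lo 6 y)) + (pre 6 (pre 4 y) - Lo 6 (Lo 4 y))"
      by (simp add: Pop_simps Dop_simps algebra_simps del: Lo_simps)
    then show ?thesis by (simp only:) (intro I_add I_diff C; simp)
  next
    assume "j = 6"
    then have "Pop j y - Dop j y = (pre 2 (pre 3 y) - Lo 2 (Lo 3 y)) - (pre 3 (pre 2 y) - Lo 3 (Lo 2 y))
      + (pre 4 (pre 5 y) - Lo 4 (Lo 5 y)) - (pre 5 (pre 4 y) - Lo 5 (Lo 4 y))"
      by (simp add: Pop_simps Dop_simps algebra_simps del: Lo_simps)
    then show ?thesis by (simp only:) (intro I_add I_diff C; simp)
  qed
qed

lemma CL7: "lw v \<Longrightarrow> single (7 # v) - L7 v \<in> (I :: 'k::field ncpoly set)"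
proof (induct v)
  case Nil then show ?case by simp
next
  case (Cons j v)
  then have jl: "j \<in> letters" and v: "lw v" by auto
  show ?case
  proof (cases "j = 7")
    case True then show ?thesis by simp
  next
    case False
    then have j: "j \<in> {1,2,3,4,5,6}" using jl by (auto simp: letters_def)
    have hL7: "hom (Suc (length v)) (L7 v :: 'k ncpoly)" by (rule homg_L7[unfolded homg_def, rule_format, OF v])
    have "single (7 # j # v) - (L7 (j # v) :: 'k ncpoly) =
      (single (7 # j # v) - single (j # 7 # v) - Pop j (single v)) + pre j (single (7 # v) - L7 v)
      + (pre j (L7 v) - Lo j (L7 v)) + (Pop j (single v) - Dop j (single v))"
      using False by (simp add: pre_diff pre_single algebra_simps del: Lo_simps)
    also have "\<dots> \<in> I"
      by (intro I_add rel7j[OF j v] I_pre[OF jl Cons.hyps[OF v]] CLo[OF jl False hL7]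
          CPop[OF j hom_single[OF v]])
    finally show ?thesis .
  qed
qed

lemma CLop: "a \<in> letters \<Longrightarrow> hom n y \<Longrightarrow> pre a y - Lop a y \<in> I"
proof (cases "a = 7")
  case True
  assume y: "hom n y"
  have "pre 7 y - ext L7 y \<in> I"
  proof (rule cong_lift[OF _ lin_ext[OF good_L7] y])
    fix v :: "nat list" assume v: "lw v"
    show "single (7 # v) - ext L7 (single v) \<in> I"
      using CL7[OF v] by (simp add: ext_single_F[OF good_L7 v])
  qed simp
  then show ?thesis using True by simp
next
  case False
  assume "a \<in> letters" "hom n y"
  then show ?thesis using CLo[of a n y] False by simp
qed

definition Psi :: "nat list \<Rightarrow> 'k::field ncpoly" where
  "Psi w = op w (single [])"

lemma hom_Psi: "lw w \<Longrightarrow> hom (length w) (Psi w)"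
  using hom_op[of w 0 "single []"] hom_single[of "[]"] by (simp add: Psi_def)

lemma CPsi: "lw w \<Longrightarrow> single w - Psi w \<in> (I :: 'k::field ncpoly set)"
proof (induct w)
  case Nil then show ?case by (simp add: Psi_def)
next
  case (Cons a w)
  then have al: "a \<in> letters" and w: "lw w" by auto
  have "single (a # w) - (Psi (a # w) :: 'k ncpoly) = pre a (single w - Psi w) + (pre a (Psi w) - Lop a (Psi w))"
    by (simp add: Psi_def pre_diff pre_single del: Lop_simps)
  also have "\<dots> \<in> I"
    by (rule I_add[OF I_pre[OF al Cons.hyps[OF w]] CLop[OF al hom_Psi[OF w]]])
  finally show ?case .
qed


fun nrm :: "nat list \<Rightarrow> bool" where
  "nrm [] = True"
| "nrm (a # w) = (a \<in> letters \<and> nrm w \<and> (a = 7 \<longrightarrow> (w = [] \<or> hd w = 7)) \<and> (a = 6 \<longrightarrow> (w = [] \<or> hd w \<noteq> 1)))"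

lemma nrm_lw: "nrm w \<Longrightarrow> lw w"
  by (induct w) auto

definition nsup :: "'k::field ncpoly \<Rightarrow> bool" where
  "nsup z \<longleftrightarrow> (\<forall>x. z x \<noteq> 0 \<longrightarrow> nrm x)"

lemma nsup_add: "nsup f \<Longrightarrow> nsup g \<Longrightarrow> nsup (f + g)"
  unfolding nsup_def by (metis add.right_neutral plus_fun_apply)
lemma nsup_diff: "nsup f \<Longrightarrow> nsup g \<Longrightarrow> nsup (f - g)"
  unfolding nsup_def by (metis diff_zero minus_apply)
lemma nsup_single: "nrm w \<Longrightarrow> nsup (single w)"
  unfolding nsup_def single_def by auto
lemma nsup_pre: "a \<in> {1,2,3,4,5} \<Longrightarrow> nsup z \<Longrightarrow> nsup (pre a z)"
  unfolding nsup_def pre_def by (auto split: list.split if_splits simp: letters_def)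
lemma nsup_ext: "(\<And>v. nrm v \<Longrightarrow> nsup (F v)) \<Longrightarrow> nsup z \<Longrightarrow> nsup (ext F z)"
proof -
  assume F: "\<And>v. nrm v \<Longrightarrow> nsup (F v)" and z: "nsup z"
  show ?thesis unfolding nsup_def
  proof (intro allI impI)
    fix x assume nz: "ext F z x \<noteq> 0"
    obtain v where "z v \<noteq> 0" "F v x \<noteq> 0" using nz by (metis ext_nz)
    then show "nrm x" using F z unfolding nsup_def by blast
  qed
qed

lemma nsup_L6: "nrm v \<Longrightarrow> nsup (L6 v)"
proof (induct v)
  case Nil then show ?case by (simp add: nsup_single letters_def)
next
  case (Cons a v)
  show ?case
  proof (cases "a = 1")
    case True
    then have v: "nrm v" using Cons by simp
    have s: "nsup (single (b # c # v))" if "b \<in> {2,3,4,5}" "c \<in> {2,3,4,5}" for b c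
      using that v by (intro nsup_single) (auto simp: letters_def)
    have e: "L6 (a # v) = pre 1 (L6 v) + (single (4#3#v) - single (3#4#v)
          + single (5#2#v) - (single (2#5#v) :: 'a ncpoly))" using True by simp
    show ?thesis unfolding e
      by (intro nsup_add nsup_diff nsup_pre Cons.hyps[OF v] s; simp)
  next
    case False
    then show ?thesis using Cons by (simp add: nsup_single letters_def)
  qed
qed

lemma nsup_Lo: "a \<in> {1,2,3,4,5,6} \<Longrightarrow> nsup z \<Longrightarrow> nsup (Lo a z)"
  by (cases "a = 6") (auto simp: nsup_pre intro: nsup_ext nsup_L6)

definition nsop :: "('k::field ncpoly \<Rightarrow> 'k ncpoly) \<Rightarrow> bool" where
  "nsop T \<longleftrightarrow> (\<forall>z. nsup z \<longrightarrow> nsup (T z))"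

lemma nsop_if: "(c \<Longrightarrow> nsop a) \<Longrightarrow> (\<not> c \<Longrightarrow> nsop b) \<Longrightarrow> nsop (if c then a else b)"
  by auto

lemma nsup_LoLo: "a \<in> {1,2,3,4,5,6} \<Longrightarrow> b \<in> {1,2,3,4,5,6} \<Longrightarrow> nsup z \<Longrightarrow> nsup (Lo a (Lo b z))"
  by (intro nsup_Lo)

lemma nsop_Dop: "nsop (Dop j)"
  unfolding Dop_def
  apply (intro nsop_if)
  apply (unfold nsop_def; intro allI impI nsup_add nsup_diff nsup_LoLo; simp)+
  done

lemma nsup_Dop: "nsup z \<Longrightarrow> nsup (Dop j z)"
  using nsop_Dop unfolding nsop_def by blast

lemma nsup_L7: "nrm v \<Longrightarrow> nsup (L7 v)"
proof (induct v)
  case Nil then show ?case by (simp add: nsup_single letters_def)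
next
  case (Cons a v)
  then have v: "nrm v" and al: "a \<in> letters" by auto
  show ?case
  proof (cases "a = 7")
    case True
    then show ?thesis using Cons by (auto simp: nsup_single letters_def)
  next
    case False
    then have a6: "a \<in> {1,2,3,4,5,6}" using al by (auto simp: letters_def)
    have e: "L7 (a # v) = Lo a (L7 v) + Dop a (single v)" using False by simp
    show ?thesis unfolding e
      by (intro nsup_add nsup_Lo[OF a6] nsup_Dop Cons.hyps[OF v] nsup_single[OF v])
  qed
qed

lemma nsup_Lop: "a \<in> letters \<Longrightarrow> nsup z \<Longrightarrow> nsup (Lop a z)"
  by (cases "a = 7") (auto simp: letters_def intro: nsup_ext nsup_L7 nsup_Lo)

lemma nsup_Psi: "lw w \<Longrightarrow> nsup (Psi w)"
  by (induct w) (auto simp: Psi_def nsup_single nsup_Lop)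

lemma Lop_single_nrm: "nrm (a # v) \<Longrightarrow> Lop a (single v) = single (a # v)"
proof -
  assume n: "nrm (a # v)"
  then have al: "a \<in> letters" by simp
  have v: "lw v" using n nrm_lw by simp
  consider "a = 7" | "a = 6" | "a \<in> {1,2,3,4,5}" using al unfolding letters_eq by auto
  then show ?thesis
  proof cases
    case 1
    then have "v = [] \<or> hd v = 7" using n by simp
    moreover have "K (single v) = (L7 v :: 'a ncpoly)" by (rule ext_single_F[OF good_L7 v])
    ultimately show ?thesis using 1 by (cases v) auto
  next
    case 2
    then have "v = [] \<or> hd v \<noteq> 1" using n by simp
    moreover have "ext L6 (single v) = (L6 v :: 'a ncpoly)" by (rule ext_single_F[OF good_L6 v])
    ultimately show ?thesis using 2 by (cases v) auto
  next
    case 3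
    then show ?thesis by (auto simp: pre_single)
  qed
qed

lemma Psi_nrm: "nrm w \<Longrightarrow> Psi w = single w"
proof (induct w)
  case Nil then show ?case by (simp add: Psi_def)
next
  case (Cons a w)
  then have "nrm w" by simp
  note Cons.hyps[OF this]
  then show ?case using Lop_single_nrm[OF Cons.prems] by (simp add: Psi_def)
qed


interpretation ncv: vector_space "nc_scale :: 'k::field \<Rightarrow> 'k ncpoly \<Rightarrow> 'k ncpoly"
  by unfold_locales (simp_all add: nc_scale_def fun_eq_iff algebra_simps)

lemma hom_part_iff: "f \<in> hom_part n \<longleftrightarrow> hom n f"
proof
  assume "f \<in> hom_part n" then show "hom n f"
    by (auto simp: hom_part_def hom_def free_alg_def)
next
  assume h: "hom n f"
  then have "f \<in> free_alg" by (rule hom_free)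
  then show "f \<in> hom_part n" using h by (auto simp: hom_part_def hom_def)
qed

lemma ext_cong_supp: "(\<And>v. lw v \<Longrightarrow> z v \<noteq> 0 \<Longrightarrow> F v = G v) \<Longrightarrow> ext F z = ext G z"
  unfolding ext_def Wd_def by (rule ext, rule sum.cong) (auto, metis)

lemma single_inj: "single v = (single w :: 'k::field ncpoly) \<Longrightarrow> v = w"
proof -
  assume "single v = (single w :: 'k ncpoly)"
  then have "single v v = (single w v :: 'k)" by simp
  then show ?thesis by (simp add: single_def split: if_splits)
qed

lemma dim_hom_part: "ncv.dim (hom_part n :: 'k::field ncpoly set) = 7 ^ n"
proof -
  let ?B = "(single :: nat list \<Rightarrow> 'k ncpoly) ` W n"
  have inj: "inj_on (single :: nat list \<Rightarrow> 'k ncpoly) (W n)"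
    by (rule inj_onI) (rule single_inj)
  have "card ?B = 7 ^ n" using card_image[OF inj] card_W by simp
  moreover have "card ?B = ncv.dim (hom_part n :: 'k ncpoly set)"
  proof (rule ncv.basis_card_eq_dim)
    show "?B \<subseteq> hom_part n"
      by (auto simp: hom_part_iff W_def intro!: hom_single[of _, simplified])
    show "hom_part n \<subseteq> ncv.span ?B"
    proof
      fix f :: "'k ncpoly" assume "f \<in> hom_part n"
      then have h: "hom n f" by (simp add: hom_part_iff)
      have "f = (\<Sum>v\<in>W n. nc_scale (f v) (single v))" by (rule hom_expand[OF h])
      also have "\<dots> \<in> ncv.span ?B"
        by (intro ncv.span_sum ncv.span_scale ncv.span_base) auto
      finally show "f \<in> ncv.span ?B" .
    qed
    show "ncv.independent ?B"
    proof (rule ncv.independent_if_scalars_zero)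
      show "finite ?B" by simp
      fix c :: "'k ncpoly \<Rightarrow> 'k" and x assume s: "(\<Sum>x\<in>?B. nc_scale (c x) x) = 0" and x: "x \<in> ?B"
      then obtain w where w: "w \<in> W n" and xw: "x = single w" by auto
      have "(\<Sum>x\<in>?B. nc_scale (c x) x) = (\<Sum>v\<in>W n. nc_scale (c (single v)) (single v))"
        by (rule sum.reindex[OF inj, unfolded comp_def])
      then have "0 = (\<Sum>v\<in>W n. nc_scale (c (single v)) (single v)) w" using s by simp
      also have "\<dots> = (\<Sum>v\<in>W n. if v = w then c (single v) else 0)"
        by (simp add: sum_fun_apply nc_scale_def single_def if_distrib cong: if_cong)
      also have "\<dots> = c x" using w xw by (simp add: sum.delta')
      finally show "c x = 0" by simp
    qed
  qed
  ultimately show ?thesis by simp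
qed

definition Nw :: "nat \<Rightarrow> nat list set" where "Nw n = {w \<in> W n. nrm w}"

lemma Psi_nonnrm: "lw v \<Longrightarrow> \<not> nrm w \<Longrightarrow> Psi v w = 0"
  using nsup_Psi unfolding nsup_def by blast

lemma I_hom_zero:
  assumes gI: "g \<in> I" and gh: "hom n g" and gn: "nsup g"
  shows "g = 0"
proof -
  have ls1: "ls (single [] :: 'a ncpoly)" by simp
  have "act g (single []) = 0" by (rule I_ann[OF gI ls1])
  moreover have "act g (single []) = ext Psi g"
    by (simp add: act_def Psi_def[abs_def])
  moreover have "ext Psi g = ext single g"
    by (rule ext_cong_supp) (use gn in \<open>auto simp: nsup_def Psi_nrm\<close>)
  moreover have "ext single g = g" by (rule ext_single_z[OF hom_ls[OF gh]])
  ultimately show ?thesis by simp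
qed

lemma dim_I_hom: "ncv.dim (I \<inter> hom_part n :: 'k::field ncpoly set) = card (W n - Nw n)"
proof -
  define b :: "nat list \<Rightarrow> 'k ncpoly" where "b w = single w - Psi w" for w
  let ?A = "W n - Nw n"
  let ?B = "b ` ?A"
  have bw: "b v w = (if v = w then 1 else 0)" if "v \<in> ?A" "w \<in> ?A" for v w
    using that Psi_nonnrm[of v w] by (auto simp: b_def single_def Nw_def W_def)
  have inj: "inj_on b ?A"
  proof (rule inj_onI)
    fix v w assume v: "v \<in> ?A" and w: "w \<in> ?A" and e: "b v = b w"
    have "b v w = b w w" using e by simp
    then show "v = w" using bw[OF v w] bw[OF w w] by (simp split: if_splits)
  qed
  have hb: "hom n (b v)" if "v \<in> W n" for v
    using that by (auto simp: b_def W_def intro!: hom_diff hom_Psi dest: hom_single)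
  have Ib: "b v \<in> I" if "v \<in> W n" for v
    using that CPsi by (auto simp: b_def W_def)
  have "card ?B = card ?A" by (rule card_image[OF inj])
  moreover have "card ?B = ncv.dim (I \<inter> hom_part n :: 'k ncpoly set)"
  proof (rule ncv.basis_card_eq_dim)
    show "?B \<subseteq> I \<inter> hom_part n" using hb Ib by (auto simp: hom_part_iff)
    show "I \<inter> hom_part n \<subseteq> ncv.span ?B"
    proof
      fix f :: "'k ncpoly" assume f: "f \<in> I \<inter> hom_part n"
      then have fI: "f \<in> I" and fh: "hom n f" by (auto simp: hom_part_iff)
      define g where "g = f - (\<Sum>v\<in>?A. nc_scale (f v) (b v))"
      have gI: "g \<in> I" unfolding g_def
        by (intro I_diff fI I_sum I_scale Ib) auto
      have gh: "hom n g" unfolding g_def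
        by (intro hom_diff fh hom_sum hom_scale hb) auto
      have gn: "nsup g" unfolding nsup_def
      proof (intro allI impI)
        fix x assume gx: "g x \<noteq> 0"
        then have xW: "x \<in> W n" using gh by (auto simp: hom_def W_def)
        show "nrm x"
        proof (rule ccontr)
          assume nx: "\<not> nrm x"
          then have xA: "x \<in> ?A" using xW by (auto simp: Nw_def)
          have "(\<Sum>v\<in>?A. nc_scale (f v) (b v)) x = (\<Sum>v\<in>?A. if v = x then f v else 0)"
            unfolding sum_fun_apply by (intro sum.cong refl) (auto simp: nc_scale_def bw[OF _ xA])
          also have "\<dots> = f x" using xA by (simp add: sum.delta')
          finally have "g x = 0" by (simp add: g_def)
          then show False using gx by simp
        qed
      qed
      have "g = 0" by (rule I_hom_zero[OF gI gh gn])
      then have "f = (\<Sum>v\<in>?A. nc_scale (f v) (b v))" by (simp add: g_def)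
      also have "\<dots> \<in> ncv.span ?B"
        by (intro ncv.span_sum ncv.span_scale ncv.span_base) auto
      finally show "f \<in> ncv.span ?B" .
    qed
    show "ncv.independent ?B"
    proof (rule ncv.independent_if_scalars_zero)
      show "finite ?B" by simp
      fix c :: "'k ncpoly \<Rightarrow> 'k" and x assume s: "(\<Sum>x\<in>?B. nc_scale (c x) x) = 0" and x: "x \<in> ?B"
      then obtain w where w: "w \<in> ?A" and xw: "x = b w" by auto
      have "(\<Sum>x\<in>?B. nc_scale (c x) x) = (\<Sum>v\<in>?A. nc_scale (c (b v)) (b v))"
        by (rule sum.reindex[OF inj, unfolded comp_def])
      then have "0 = (\<Sum>v\<in>?A. nc_scale (c (b v)) (b v)) w" using s by simp
      also have "\<dots> = (\<Sum>v\<in>?A. if v = w then c (b v) else 0)"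
        unfolding sum_fun_apply by (intro sum.cong refl) (auto simp: nc_scale_def bw[OF _ w])
      also have "\<dots> = c x" using w xw by (simp add: sum.delta')
      finally show "c x = 0" by simp
    qed
  qed
  ultimately show ?thesis by simp
qed

lemma hilb_dim_eq: "hilb_dim TYPE('k::field) n = card (Nw n)"
proof -
  have "hilb_dim TYPE('k) n = 7 ^ n - card (W n - Nw n)"
    unfolding hilb_dim_def using dim_hom_part[where 'k='k] dim_I_hom[where 'k='k] by simp
  also have "card (W n - Nw n) = card (W n) - card (Nw n)"
    by (rule card_Diff_subset) (auto simp: Nw_def intro: finite_subset)
  also have "card (W n) = 7 ^ n" by (rule card_W)
  also have "card (Nw n) \<le> 7 ^ n" using card_mono[of "W n" "Nw n"] card_W by (auto simp: Nw_def)
  then have "7 ^ n - (7 ^ n - card (Nw n)) = card (Nw n)" by simp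
  finally show ?thesis .
qed


definition al :: "nat \<Rightarrow> nat list \<Rightarrow> bool" where
  "al a w \<longleftrightarrow> (a = 7 \<longrightarrow> (w = [] \<or> hd w = 7)) \<and> (a = 6 \<longrightarrow> (w = [] \<or> hd w \<noteq> 1))"

lemma nrm_Cons_al: "nrm (a # w) \<longleftrightarrow> a \<in> letters \<and> nrm w \<and> al a w"
  by (simp add: al_def)

lemma Nw_Suc: "Nw (Suc n) = (\<lambda>(a, w). a # w) ` (SIGMA a:letters. {w \<in> Nw n. al a w})"
proof (intro equalityI subsetI)
  fix x assume x: "x \<in> Nw (Suc n)"
  then obtain a w where xw: "x = a # w" by (cases x) (auto simp: Nw_def W_def)
  then have "a \<in> letters" "w \<in> Nw n" "al a w" using x nrm_lw[of w]
    by (auto simp: Nw_def W_def nrm_Cons_al simp del: nrm.simps)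
  then show "x \<in> (\<lambda>(a, w). a # w) ` (SIGMA a:letters. {w \<in> Nw n. al a w})"
    using xw by (auto intro!: image_eqI[where x="(a, w)"])
next
  fix x assume "x \<in> (\<lambda>(a, w). a # w) ` (SIGMA a:letters. {w \<in> Nw n. al a w})"
  then obtain a w where "x = a # w" "a \<in> letters" "w \<in> Nw n" "al a w" by auto
  then show "x \<in> Nw (Suc n)" by (auto simp: Nw_def W_def nrm_Cons_al simp del: nrm.simps)
qed

lemma finite_Nw[simp]: "finite (Nw n)"
  by (rule finite_subset[of _ "W n"]) (auto simp: Nw_def)

lemma card_Nw_Suc: "card (Nw (Suc n)) = (\<Sum>a\<in>letters. card {w \<in> Nw n. al a w})"
proof -
  have "inj_on (\<lambda>(a, w). a # w) (SIGMA a:letters. {w \<in> Nw n. al a w})"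
    by (rule inj_onI) auto
  then have "card (Nw (Suc n)) = card (SIGMA a:letters. {w \<in> Nw n. al a w})"
    unfolding Nw_Suc by (rule card_image)
  also have "\<dots> = (\<Sum>a\<in>letters. card {w \<in> Nw n. al a w})"
    by (rule card_SigmaI) auto
  finally show ?thesis .
qed

lemma nrm_rep7: "nrm w \<Longrightarrow> (w = [] \<or> hd w = 7) \<Longrightarrow> w = replicate (length w) 7"
proof (induct w)
  case Nil then show ?case by simp
next
  case (Cons a w) then show ?case by auto
qed

lemma nrm_replicate7: "nrm (replicate n 7)"
proof (induct n)
  case 0 then show ?case by simp
next
  case (Suc n) then show ?case by (cases n) auto
qed

lemma card_al7: "card {w \<in> Nw n. al 7 w} = 1"
proof -
  have "{w \<in> Nw n. al 7 w} = {replicate n 7}"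
  proof (intro equalityI subsetI)
    fix w :: "nat list" assume "w \<in> {w \<in> Nw n. al 7 w}"
    then show "w \<in> {replicate n 7}" using nrm_rep7[of w] by (auto simp: Nw_def W_def al_def)
  next
    fix w :: "nat list" assume "w \<in> {replicate n 7}"
    then show "w \<in> {w \<in> Nw n. al 7 w}"
      using nrm_replicate7[of n] nrm_lw[of "replicate n 7"]
      by (cases n) (auto simp: Nw_def W_def al_def)
  qed
  then show ?thesis by simp
qed

definition On :: "nat \<Rightarrow> nat" where "On n = card {w \<in> Nw n. w \<noteq> [] \<and> hd w = 1}"

lemma card_al6: "card {w \<in> Nw n. al 6 w} = card (Nw n) - On n"
proof -
  have "{w \<in> Nw n. al 6 w} = Nw n - {w \<in> Nw n. w \<noteq> [] \<and> hd w = 1}"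
    by (auto simp: al_def)
  then show ?thesis unfolding On_def by (simp add: card_Diff_subset)
qed

lemma card_al_other: "a \<noteq> 6 \<Longrightarrow> a \<noteq> 7 \<Longrightarrow> card {w \<in> Nw n. al a w} = card (Nw n)"
  by (simp add: al_def)

lemma On_le: "On n \<le> card (Nw n)"
  unfolding On_def by (rule card_mono) auto

lemma card_Nw_Suc': "card (Nw (Suc n)) = 6 * card (Nw n) - On n + 1"
  unfolding card_Nw_Suc sum_letters
  using card_al6[of n] card_al7[of n] card_al_other[of _ n] On_le[of n]
  by simp

lemma On_Suc: "On (Suc n) = card (Nw n)"
proof -
  have "{w \<in> Nw (Suc n). w \<noteq> [] \<and> hd w = 1} = (\<lambda>w. 1 # w) ` Nw n"
  proof (intro equalityI subsetI)
    fix x assume x: "x \<in> {w \<in> Nw (Suc n). w \<noteq> [] \<and> hd w = 1}"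
    then obtain w where "x = 1 # w" by (cases x) auto
    then show "x \<in> (\<lambda>w. 1 # w) ` Nw n" using x nrm_lw[of w] by (auto simp: Nw_def W_def)
  next
    fix x assume "x \<in> (\<lambda>w. 1 # w) ` Nw n"
    then show "x \<in> {w \<in> Nw (Suc n). w \<noteq> [] \<and> hd w = 1}"
      by (auto simp: Nw_def W_def)
  qed
  then show ?thesis unfolding On_def by (simp add: card_image)
qed

lemma On_0: "On 0 = 0"
  by (simp add: On_def Nw_def W_def)

lemma Nw_0: "card (Nw 0) = 1"
proof -
  have "Nw 0 = {[]}" by (auto simp: Nw_def W_def)
  then show ?thesis by simp
qed

lemma T_rec: "real_of_nat (card (Nw (Suc (Suc n)))) = 6 * card (Nw (Suc n)) - card (Nw n) + 1"
  using card_Nw_Suc'[of "Suc n"] On_Suc[of n] On_le[of "Suc n"] by simp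


unbundle fps_syntax

lemma T_rec_rat: "(of_nat (card (Nw (Suc (Suc n)))) :: rat) = 6 * of_nat (card (Nw (Suc n))) - of_nat (card (Nw n)) + 1"
  using card_Nw_Suc'[of "Suc n"] On_Suc[of n] On_le[of "Suc n"] by simp

lemma T1: "card (Nw (Suc 0)) = 7"
  using card_Nw_Suc'[of 0] On_0 Nw_0 by simp

theorem proposition4p2:
  shows "hilbert_series TYPE('k::field) =
    inverse (1 - 7 * fps_X + 7 * fps_X ^ 2 - fps_X ^ 3)"
proof -
  define t where "t n = (of_nat (card (Nw n)) :: rat)" for n
  have hs: "hilbert_series TYPE('k) = Abs_fps t"
    by (simp add: hilbert_series_def hilb_dim_eq t_def[abs_def])
  have t0: "t 0 = 1" by (simp add: t_def Nw_0)
  have t1: "t (Suc 0) = 7" by (simp add: t_def T1)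
  have tr: "t (Suc (Suc n)) = 6 * t (Suc n) - t n + 1" for n
    unfolding t_def by (rule T_rec_rat)
  have t2: "t (Suc (Suc 0)) = 42" using tr[of 0] t0 t1 by simp
  let ?A = "Abs_fps t"
  have e: "(1 - 7 * fps_X + 7 * fps_X ^ 2 - fps_X ^ 3) * ?A =
      ?A - fps_const 7 * (fps_X * ?A) + fps_const 7 * (fps_X ^ 2 * ?A) - fps_X ^ 3 * ?A"
    by (simp add: algebra_simps fps_numeral_fps_const)
  have c: "(?A - fps_const 7 * (fps_X * ?A) + fps_const 7 * (fps_X ^ 2 * ?A) - fps_X ^ 3 * ?A) $ n = (1 :: rat fps) $ n" for n
  proof (cases n)
    case 0 then show ?thesis by (simp add: fps_X_power_mult_nth t0)
  next
    case (Suc m)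
    show ?thesis
    proof (cases m)
      case 0 then show ?thesis using Suc by (simp add: fps_X_power_mult_nth t0 t1)
    next
      case (Suc k)
      show ?thesis
      proof (cases k)
        case 0 then show ?thesis using Suc \<open>n = Suc m\<close>
          by (simp add: fps_X_power_mult_nth t0 t1 t2)
      next
        case (Suc l)
        have "t (Suc (Suc (Suc l))) = 6 * t (Suc (Suc l)) - t (Suc l) + 1" by (rule tr)
        moreover have "t (Suc (Suc l)) = 6 * t (Suc l) - t l + 1" by (rule tr)
        ultimately show ?thesis using Suc \<open>m = Suc k\<close> \<open>n = Suc m\<close>
          by (simp add: fps_X_power_mult_nth numeral_3_eq_3 numeral_2_eq_2 algebra_simps)
      qed
    qed
  qed
  have "(1 - 7 * fps_X + 7 * fps_X ^ 2 - fps_X ^ 3) * ?A = 1"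
    unfolding e by (rule fps_ext) (rule c)
  then have "inverse (1 - 7 * fps_X + 7 * fps_X ^ 2 - fps_X ^ 3) = ?A"
    by (rule fps_inverse_unique)
  then show ?thesis using hs by simp
qed


end
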